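(* Suppose $\mathcal H=P_i\mathcal H\oplus P_j\mathcal H$ with $P_i+P_j=\mathbb 1$, $P_iP_j=0$, where $P_i$ and $P_j$ commute with $H$ and every $h_\alpha$, and each of $P_i\mathcal H$, $P_j\mathcal H$ contains no nonzero proper collecting subspace. Then there exists a nonzero operator $\sigma=P_i\sigma P_j$ with $\mathcal D(\sigma)=0$ if and only if there exists a unitary $U$ commuting with $H$ and every $h_\alpha$ such that $UP_j=P_iU$ and $U^2=\mathbb 1$. In that case the stationary operator $\sigma=P_i\sigma P_j$ is unique up to a constant factor (it is a multiple of $U\rho_j$, where $\rho_j$ is the unique stationary state supported in $P_j\mathcal H$).
   Context: Let $\mathcal H$ be a finite-dimensional complex Hilbert space, $H=H^\dagger$ and $\{h_\alpha\}$ a finite family of operators on $\mathcal H$, $\mathcal D(\rho)=-i[H,\rho]+\sum_\alpha(h_\alpha\rho h_\alpha^\dagger-\tfrac12(h_\alpha^\dagger h_\alpha\rho+\rho h_\alpha^\dagger h_\alpha))$, $\mathcal T^t=e^{t\mathcal D}$. A subspace $P\mathcal H$ ($P$ an orthogonal projector) is collecting if $\mathcal T^t(P\sigma P)=P\,\mathcal T^t(P\sigma P)\,P$ for all $t>0$ and all operators $\sigma$. *)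

theory Defs
  imports "HOL-Analysis.Analysis"
begin

text \<open>Operators on the finite-dimensional complex Hilbert space \<open>\<complex>^'n\<close> are
  represented as square matrices \<open>complex^'n^'n\<close>; \<open>**\<close> is the operator product,
  \<open>mat 1\<close> the identity.\<close>

type_synonym 'n op = "complex^'n^'n"

definition adj :: "'n::finite op \<Rightarrow> 'n op" where
  "adj A = (\<chi> i j. cnj (A $ j $ i))"

definition cscale :: "complex \<Rightarrow> 'n::finite op \<Rightarrow> 'n op" where
  "cscale c A = (\<chi> i j. c * A $ i $ j)"

definition trace_op :: "'n::finite op \<Rightarrow> complex" where
  "trace_op A = (\<Sum>i\<in>UNIV. A $ i $ i)"

definition orth_proj :: "'n::finite op \<Rightarrow> bool" where
  "orth_proj P \<longleftrightarrow> P = adj P \<and> P ** P = P"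

definition unitary_op :: "'n::finite op \<Rightarrow> bool" where
  "unitary_op U \<longleftrightarrow> adj U ** U = mat 1 \<and> U ** adj U = mat 1"

definition psd_op :: "'n::finite op \<Rightarrow> bool" where
  "psd_op A \<longleftrightarrow> A = adj A \<and> (\<forall>v::complex^'n. 0 \<le> Re (\<Sum>i\<in>UNIV. cnj (v $ i) * (A *v v) $ i))"

definition density_op :: "'n::finite op \<Rightarrow> bool" where
  "density_op \<rho> \<longleftrightarrow> psd_op \<rho> \<and> trace_op \<rho> = 1"

definition lindblad :: "'n::finite op \<Rightarrow> ('a \<Rightarrow> 'n op) \<Rightarrow> 'a set \<Rightarrow> 'n op \<Rightarrow> 'n op" where
  "lindblad H h A \<rho> =
     cscale (- \<i>) (H ** \<rho> - \<rho> ** H)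
     + (\<Sum>\<alpha>\<in>A. h \<alpha> ** \<rho> ** adj (h \<alpha>)
                 - cscale (1/2) (adj (h \<alpha>) ** h \<alpha> ** \<rho> + \<rho> ** adj (h \<alpha>) ** h \<alpha>))"

definition semigroup :: "'n::finite op \<Rightarrow> ('a \<Rightarrow> 'n op) \<Rightarrow> 'a set \<Rightarrow> real \<Rightarrow> 'n op \<Rightarrow> 'n op" where
  "semigroup H h A t \<rho> = (\<Sum>k. (t ^ k / fact k) *\<^sub>R ((lindblad H h A ^^ k) \<rho>))"

definition collecting :: "'n::finite op \<Rightarrow> ('a \<Rightarrow> 'n op) \<Rightarrow> 'a set \<Rightarrow> 'n op \<Rightarrow> bool" where
  "collecting H h A P \<longleftrightarrow> orth_proj P \<and>
     (\<forall>t>0. \<forall>\<sigma>. semigroup H h A t (P ** \<sigma> ** P)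
                 = P ** semigroup H h A t (P ** \<sigma> ** P) ** P)"

definition no_proper_collecting :: "'n::finite op \<Rightarrow> ('a \<Rightarrow> 'n op) \<Rightarrow> 'a set \<Rightarrow> 'n op \<Rightarrow> bool" where
  "no_proper_collecting H h A P \<longleftrightarrow>
     (\<forall>Q. orth_proj Q \<and> P ** Q = Q \<and> Q \<noteq> 0 \<and> Q \<noteq> P \<longrightarrow> \<not> collecting H h A Q)"

end

theory Submission
  imports Defs
begin

lemma adj_nth [simp]: "adj A $ i $ j = cnj (A $ j $ i)"
  by (simp add: adj_def)

lemma adj_adj [simp]: "adj (adj A) = A"
  by (simp add: adj_def vec_eq_iff)

lemma adj_mult: "adj (A ** B) = adj B ** adj (A::'n::finite op)"
  by (simp add: adj_def matrix_matrix_mult_def vec_eq_iff mult.commute)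

lemma adj_add [simp]: "adj (A + B) = adj A + adj B"
  by (simp add: adj_def vec_eq_iff)

lemma adj_diff [simp]: "adj (A - B) = adj A - adj B"
  by (simp add: adj_def vec_eq_iff)

lemma adj_uminus [simp]: "adj (- A) = - adj A"
  by (simp add: adj_def vec_eq_iff)

lemma adj_zero [simp]: "adj 0 = 0"
  by (simp add: adj_def vec_eq_iff)

lemma adj_mat [simp]: "adj (mat c) = mat (cnj c)"
  by (simp add: adj_def vec_eq_iff mat_def)

lemma adj_sum: "adj (\<Sum>a\<in>S. f a) = (\<Sum>a\<in>S. adj (f a))"
  by (induction S rule: infinite_finite_induct) auto

lemma adj_eq_iff: "adj A = adj B \<longleftrightarrow> A = B"
  by (metis adj_adj)

lemma adj_eq_0_iff [simp]: "adj A = 0 \<longleftrightarrow> A = 0"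
  by (metis adj_adj adj_zero)

lemma matrix_add_rdistrib: "(A + B) ** C = A ** C + B ** (C::'n::finite op)"
  by (vector matrix_matrix_mult_def sum.distrib[symmetric] field_simps)

lemma matrix_diff_rdistrib: "(A - B) ** C = A ** C - B ** (C::'n::finite op)"
  by (vector matrix_matrix_mult_def sum_subtractf[symmetric] field_simps)

lemma matrix_diff_ldistrib: "C ** (A - B) = C ** A - C ** (B::'n::finite op)"
  by (vector matrix_matrix_mult_def sum_subtractf[symmetric] field_simps)

lemma matrix_uminus_left [simp]: "(- A) ** C = - (A ** (C::'n::finite op))"
  by (vector matrix_matrix_mult_def sum_negf[symmetric])

lemma matrix_uminus_right [simp]: "C ** (- A) = - (C ** (A::'n::finite op))"
  by (vector matrix_matrix_mult_def sum_negf[symmetric])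

lemma matrix_sum_left: "(\<Sum>a\<in>S. f a) ** (C::'n::finite op) = (\<Sum>a\<in>S. f a ** C)"
  by (induction S rule: infinite_finite_induct) (auto simp: matrix_add_rdistrib)

lemma matrix_sum_right: "(C::'n::finite op) ** (\<Sum>a\<in>S. f a) = (\<Sum>a\<in>S. C ** f a)"
  by (induction S rule: infinite_finite_induct) (auto simp: matrix_add_ldistrib)

lemma mat_nth_mult: "(mat c ** A) $ i $ j = c * A $ i $ j"
  by (simp add: matrix_matrix_mult_def mat_def if_distrib if_distribR sum.delta cong: if_cong)

lemma mat_nth_mult_right: "(A ** mat c) $ i $ j = A $ i $ j * c"
  by (simp add: matrix_matrix_mult_def mat_def if_distrib if_distribR sum.delta' cong: if_cong)

lemma mat_mult_comm: "mat c ** A = A ** (mat c :: 'n::finite op)"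
  by (simp add: vec_eq_iff mat_nth_mult mat_nth_mult_right mult.commute)

lemma mat_mult_mat [simp]: "mat a ** mat b = (mat (a * b) :: 'n::finite op)"
  by (simp add: vec_eq_iff mat_nth_mult) (simp add: mat_def)

lemma mat_add: "mat a + mat b = (mat (a + b) :: 'n::finite op)"
  by (simp add: mat_def vec_eq_iff)

lemma mat_diff: "mat a - mat b = (mat (a - b) :: 'n::finite op)"
  by (simp add: mat_def vec_eq_iff)

lemma mat_uminus: "- mat a = (mat (- a) :: 'n::finite op)"
  by (simp add: mat_def vec_eq_iff)

lemma cscale_mat: "cscale c A = mat c ** (A::'n::finite op)"
  by (simp add: cscale_def vec_eq_iff mat_nth_mult)

lemma mat_mult_assoc_comm: "A ** (mat c ** B) = mat c ** (A ** (B::'n::finite op))"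
  by (metis mat_mult_comm matrix_mul_assoc)

lemma mat_1_neq_0: "(mat 1 :: 'n::finite op) \<noteq> 0"
proof
  assume "(mat 1 :: 'n op) = 0"
  then have "(mat 1 :: 'n op) $ undefined $ undefined = 0" by simp
  then show False by (simp add: mat_def)
qed

lemma scaleR_mat: "r *\<^sub>R (A::'n::finite op) = mat (of_real r) ** A"
  unfolding vec_eq_iff by (simp add: mat_nth_mult) (metis scaleR_conv_of_real)

lemma trace_add [simp]: "trace_op (A + B) = trace_op A + trace_op B"
  by (simp add: trace_op_def sum.distrib)

lemma trace_diff [simp]: "trace_op (A - B) = trace_op A - trace_op B"
  by (simp add: trace_op_def sum_subtractf)

lemma trace_uminus [simp]: "trace_op (- A) = - trace_op A"
  by (simp add: trace_op_def sum_negf)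

lemma trace_zero [simp]: "trace_op 0 = 0"
  by (simp add: trace_op_def)

lemma trace_sum: "trace_op (\<Sum>a\<in>S. f a) = (\<Sum>a\<in>S. trace_op (f a))"
  by (induction S rule: infinite_finite_induct) auto

lemma trace_comm: "trace_op (A ** B) = trace_op (B ** (A::'n::finite op))"
  unfolding trace_op_def matrix_matrix_mult_def
  by (simp, subst sum.swap, simp add: mult.commute)

lemma trace_mat_mult: "trace_op (mat c ** A) = c * trace_op A"
  by (simp add: trace_op_def mat_nth_mult sum_distrib_left)

lemma trace_adj: "trace_op (adj A) = cnj (trace_op A)"
  by (simp add: trace_op_def)

lemma trace_scaleR: "trace_op (r *\<^sub>R A) = of_real r * trace_op A"
  by (simp add: scaleR_mat trace_mat_mult)

section \<open>Hilbert-Schmidt pairing\<close>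

definition hs :: "'n::finite op \<Rightarrow> 'n op \<Rightarrow> complex" where
  "hs A B = trace_op (adj A ** B)"

lemma hs_expand: "hs A B = (\<Sum>i\<in>UNIV. \<Sum>k\<in>UNIV. cnj (A $ k $ i) * B $ k $ i)"
  by (simp add: hs_def trace_op_def matrix_matrix_mult_def)

lemma inner_op: "inner A B = Re (hs A B)"
  unfolding hs_expand inner_vec_def
  by (subst sum.swap) (simp add: Re_sum inner_complex_def)

lemma hs_cnj: "cnj (hs A B) = hs B A"
  by (simp add: hs_expand mult.commute)

lemma hs_self: "hs A A = of_real (norm A ^ 2)"
proof -
  have "hs A A = of_real (inner A A)"
  proof -
    have "Im (hs A A) = 0" by (simp add: hs_expand Im_sum mult.commute)
    then show ?thesis by (simp add: inner_op complex_eq_iff)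
  qed
  then show ?thesis by (simp add: power2_norm_eq_inner)
qed

lemma hs_self_zero: "hs A A = 0 \<longleftrightarrow> A = 0"
  by (simp add: hs_self)

definition cinner :: "complex^'n::finite \<Rightarrow> complex^'n \<Rightarrow> complex" where
  "cinner v w = (\<Sum>i\<in>UNIV. cnj (v $ i) * w $ i)"

lemma cinner_adj: "cinner v (A *v w) = cinner (adj A *v v) w"
  unfolding cinner_def matrix_vector_mult_def
  by (simp add: sum_distrib_left sum_distrib_right mult_ac) (subst sum.swap, simp)

lemma cinner_cnj: "cnj (cinner v w) = cinner w v"
  by (simp add: cinner_def mult.commute)

lemma cinner_self: "cinner v v = of_real (norm v ^ 2)"
proof -
  have "Im (cinner v v) = 0" by (simp add: cinner_def Im_sum mult.commute)
  moreover have "Re (cinner v v) = inner v v"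
    by (simp add: cinner_def inner_vec_def Re_sum inner_complex_def)
  ultimately show ?thesis by (simp add: complex_eq_iff power2_norm_eq_inner)
qed

lemma cinner_self_zero: "cinner v v = 0 \<longleftrightarrow> v = 0"
  by (simp add: cinner_self)

lemma cinner_add_left: "cinner (u + v) w = cinner u w + cinner v w"
  by (simp add: cinner_def sum.distrib distrib_right)
lemma cinner_add_right: "cinner w (u + v) = cinner w u + cinner w v"
  by (simp add: cinner_def sum.distrib distrib_left)
lemma cinner_diff_left: "cinner (u - v) w = cinner u w - cinner v w"
  by (simp add: cinner_def sum_subtractf left_diff_distrib)
lemma cinner_diff_right: "cinner w (u - v) = cinner w u - cinner w v"
  by (simp add: cinner_def sum_subtractf right_diff_distrib)
lemma cinner_scale_left: "cinner (c *s v) w = cnj c * cinner v w"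
  by (simp add: cinner_def sum_distrib_left mult_ac)
lemma cinner_scale_right: "cinner v (c *s w) = c * cinner v w"
  by (simp add: cinner_def sum_distrib_left mult_ac)
lemma cinner_zero_left [simp]: "cinner 0 w = 0"
  by (simp add: cinner_def)
lemma cinner_zero_right [simp]: "cinner w 0 = 0"
  by (simp add: cinner_def)

lemma matrix_vector_scale: "A *v (c *s v) = c *s (A *v (v::complex^'n::finite))"
  by (simp add: matrix_vector_mult_def vec_eq_iff sum_distrib_left mult_ac)

lemma mat_vector_mult: "mat c *v (v::complex^'n::finite) = c *s v"
  by (simp add: matrix_vector_mult_def vec_eq_iff mat_def if_distrib if_distribR sum.delta cong: if_cong)

lemma psd_op_iff: "psd_op A \<longleftrightarrow> A = adj A \<and> (\<forall>v. 0 \<le> Re (cinner v (A *v v)))"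
  by (simp add: psd_op_def cinner_def)

lemma herm_quad_real: assumes "A = adj A" shows "Im (cinner v (A *v v)) = 0"
proof -
  have "cnj (cinner v (A *v v)) = cinner v (A *v v)"
    by (metis assms cinner_adj cinner_cnj)
  then show ?thesis by (metis cnj.sel(2) complex_cnj_cancel_iff equation_minus_iff minus_equation_iff
      neg_equal_zero Reals_cnj_iff complex_is_Real_iff)
qed

lemma real_quad_zero:
  fixes a b :: real
  assumes "\<And>t. 0 \<le> a * t + b * t^2"
  shows "a = 0"
proof (rule ccontr)
  assume a: "a \<noteq> 0"
  define c where "c = \<bar>b\<bar> + 1"
  have cpos: "c > 0" unfolding c_def by simp
  define t where "t = - a / (2 * c)"
  have e: "a * t + b * t^2 = a^2 * (b - 2*c) / (4*c^2)"
    unfolding t_def using cpos by (simp add: field_simps power2_eq_square)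
  have "b - 2*c < 0" unfolding c_def by (cases "b \<ge> 0") auto
  moreover have "a^2 > 0" using a by simp
  ultimately have "a^2 * (b - 2*c) < 0" by (simp add: mult_pos_neg)
  then have "a * t + b * t^2 < 0" unfolding e using cpos by (simp add: divide_neg_pos)
  with assms[of t] show False by simp
qed

lemma psd_kernel:
  assumes psd: "psd_op A" and z: "Re (cinner v (A *v v)) = 0"
  shows "A *v v = 0"
proof -
  have herm: "A = adj A" using psd by (simp add: psd_op_iff)
  let ?w = "A *v v"
  have "0 \<le> 2 * Re (cinner ?w (A *v v)) * t + Re (cinner ?w (A *v ?w)) * t^2" for t :: real
  proof -
    let ?u = "v + of_real t *s ?w"
    have "0 \<le> Re (cinner ?u (A *v ?u))" using psd by (simp add: psd_op_iff)
    also have "cinner ?u (A *v ?u) = cinner v (A *v v) + of_real t * cinner v (A *v ?w)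
        + of_real t * cinner ?w (A *v v) + of_real t * of_real t * cinner ?w (A *v ?w)"
      by (simp add: matrix_vector_right_distrib matrix_vector_scale cinner_add_left cinner_add_right
          cinner_scale_left cinner_scale_right algebra_simps)
    also have "cinner v (A *v ?w) = cnj (cinner ?w (A *v v))"
      by (metis cinner_adj cinner_cnj herm)
    finally show ?thesis using z by (simp add: power2_eq_square ac_simps)
  qed
  then have "2 * Re (cinner ?w (A *v v)) = 0" by (rule real_quad_zero)
  then have "cinner ?w ?w = 0"
    by (simp add: cinner_self)
  then show ?thesis by (simp add: cinner_self_zero)
qed

lemma mat_neg_mult: "mat (- c) ** Y = - (mat c ** (Y::'n::finite op))"
  by (simp add: vec_eq_iff mat_nth_mult)

lemma trace_rot:
  fixes A B C :: "'n::finite op"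
  shows "trace_op (A ** B ** C) = trace_op (C ** A ** B)"
  by (simp add: trace_comm[of "A ** B" C] matrix_mul_assoc)

lemma trace_sandwich:
  fixes B X Y :: "'n::finite op"
  shows "trace_op (adj Y ** (B ** X ** adj B)) = trace_op (adj (adj B ** Y ** B) ** X)"
  by (simp add: adj_mult matrix_mul_assoc trace_comm[of "adj Y ** B ** X" "adj B"])

section \<open>Lindblad structure\<close>

definition comm_all :: "'n::finite op \<Rightarrow> ('a \<Rightarrow> 'n op) \<Rightarrow> 'a set \<Rightarrow> 'n op \<Rightarrow> bool" where
  "comm_all H h A U \<longleftrightarrow> U ** H = H ** U \<and>
     (\<forall>\<alpha>\<in>A. U ** h \<alpha> = h \<alpha> ** U \<and> U ** adj (h \<alpha>) = adj (h \<alpha>) ** U)"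


lemma comm_all_mat: "comm_all H h A (mat c)"
  by (simp add: comm_all_def mat_mult_comm)

lemma comm_all_herm:
  assumes "P = adj P" "P ** H = H ** P" "\<forall>\<alpha>\<in>A. h \<alpha> ** P = P ** h \<alpha>"
  shows "comm_all H h A P"
  unfolding comm_all_def
proof (intro conjI ballI)
  show "P ** H = H ** P" by fact
  fix \<alpha> assume a: "\<alpha> \<in> A"
  then show "P ** h \<alpha> = h \<alpha> ** P" using assms by simp
  have "adj (h \<alpha> ** P) = adj (P ** h \<alpha>)" using assms a by simp
  then show "P ** adj (h \<alpha>) = adj (h \<alpha>) ** P"
    using assms(1) by (simp add: adj_mult)
qed

lemma comm_all_adj:
  assumes "H = adj H" "comm_all H h A U" shows "comm_all H h A (adj U)"
  using assms unfolding comm_all_def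
  by (metis adj_adj adj_mult)

lemma comm_all_mult:
  assumes "comm_all H h A U" "comm_all H h A V" shows "comm_all H h A (U ** V)"
proof -
  have "U ** V ** X = X ** (U ** V)" if "U ** X = X ** U" "V ** X = X ** V" for X
    by (metis matrix_mul_assoc that)
  then show ?thesis using assms unfolding comm_all_def by blast
qed

lemma psd_adj_mult: "psd_op (adj M ** M)"
  unfolding psd_op_iff
  by (simp add: adj_mult matrix_vector_mul_assoc[symmetric] cinner_adj cinner_self)

lemma psd_add: "psd_op X \<Longrightarrow> psd_op Y \<Longrightarrow> psd_op (X + Y)"
  unfolding psd_op_iff
  by (simp add: matrix_vector_mult_add_rdistrib cinner_add_right)

lemma psd_zero: "psd_op 0"
  by (simp add: psd_op_iff)

lemma psd_sum: "(\<And>a. a \<in> S \<Longrightarrow> psd_op (f a)) \<Longrightarrow> psd_op (\<Sum>a\<in>S. f a)"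
  by (induction S rule: infinite_finite_induct) (auto simp: psd_zero psd_add)

lemma sum_adj_mult_zero:
  assumes "finite S" "(\<Sum>a\<in>S. adj (M a) ** M a) = 0" "a \<in> S"
  shows "M a = 0"
proof -
  have "(\<Sum>a\<in>S. norm (M a) ^ 2) = 0"
  proof -
    have "of_real (\<Sum>a\<in>S. norm (M a) ^ 2) = (\<Sum>a\<in>S. hs (M a) (M a))"
      by (simp add: hs_self)
    also have "\<dots> = trace_op (\<Sum>a\<in>S. adj (M a) ** M a)"
      by (simp add: hs_def trace_sum)
    finally show ?thesis by (metis assms(2) of_real_eq_0_iff trace_zero)
  qed
  then have "norm (M a) ^ 2 = 0" using assms by (simp add: sum_nonneg_eq_0_iff)
  then show ?thesis by simp
qed

lemma inj_from_adj:
  fixes F G :: "'n::finite op \<Rightarrow> 'n op"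
  assumes lin: "linear F" and adjFG: "\<And>X Y. hs (F X) Y = hs X (G Y)" and ig: "inj G"
  shows "inj F"
proof -
  have aG: "adjoint F = G"
    by (rule adjoint_unique) (simp add: inner_op adjFG)
  have "linear G" using adjoint_linear[OF lin] aG by simp
  then have "surj G" using ig by (simp add: linear_injective_imp_surjective)
  then show ?thesis using lin aG linear_surj_adj_imp_inj by metis
qed

lemma linear_inj_iff: "linear F \<Longrightarrow> inj F \<longleftrightarrow> (\<forall>x. F x = 0 \<longrightarrow> x = 0)"
  by (simp add: linear_injective_0)

locale lind =
  fixes H :: "'n::finite op" and h :: "'a \<Rightarrow> 'n op" and A :: "'a set"
  assumes finA: "finite A" and herm: "H = adj H"
begin

definition S where "S = (\<Sum>\<alpha>\<in>A. adj (h \<alpha>) ** h \<alpha>)"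
definition K where "K = mat (- \<i>) ** H - mat (1/2) ** S"
definition J where "J X = (\<Sum>\<alpha>\<in>A. h \<alpha> ** X ** adj (h \<alpha>))"
definition Jd where "Jd X = (\<Sum>\<alpha>\<in>A. adj (h \<alpha>) ** X ** h \<alpha>)"
abbreviation D where "D \<equiv> lindblad H h A"
definition Ds where "Ds X = adj K ** X + X ** K + Jd X"

lemma S_herm: "adj S = S"
  by (simp add: S_def adj_sum adj_mult)

lemma adjK: "adj K = mat \<i> ** H - mat (1/2) ** S"
  using herm by (simp add: K_def adj_mult S_herm mat_mult_comm)

lemma K_adjK: "K + adj K = - S"
proof -
  have "K + adj K = - (mat (1/2) ** S + mat (1/2) ** S)"
    unfolding adjK unfolding K_def by (simp add: mat_neg_mult algebra_simps)
  also have "mat (1/2) ** S + mat (1/2) ** S = S"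
    by (simp add: matrix_add_rdistrib[symmetric] mat_add)
  finally show ?thesis .
qed

lemma D_form: "D X = K ** X + X ** adj K + J X"
proof -
  have 1: "(\<Sum>\<alpha>\<in>A. adj (h \<alpha>) ** h \<alpha> ** X + X ** adj (h \<alpha>) ** h \<alpha>) = S ** X + X ** S"
    by (simp add: S_def sum.distrib matrix_sum_left matrix_sum_right matrix_mul_assoc)
  have "D X = mat (- \<i>) ** (H ** X - X ** H) + (J X - mat (1/2) ** (S ** X + X ** S))"
    unfolding lindblad_def cscale_mat J_def sum_subtractf matrix_sum_right[symmetric] 1 ..
  also have "\<dots> = K ** X + X ** adj K + J X"
    unfolding adjK unfolding K_def
    by (simp add: matrix_diff_rdistrib matrix_diff_ldistrib matrix_add_ldistrib
        mat_mult_assoc_comm matrix_mul_assoc[symmetric] mat_neg_mult algebra_simps)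
  finally show ?thesis .
qed

lemma adj_Jd: "adj (Jd X) = Jd (adj X)"
  by (simp add: Jd_def adj_sum adj_mult matrix_mul_assoc)

lemma adj_J: "adj (J X) = J (adj X)"
  by (simp add: J_def adj_sum adj_mult matrix_mul_assoc)

lemma adj_D: "adj (D X) = D (adj X)"
  by (simp add: D_form adj_J adj_mult)

lemma adj_Ds: "adj (Ds X) = Ds (adj X)"
  by (simp add: Ds_def adj_Jd adj_mult)

lemma hs_D: "hs Y (D X) = hs (Ds Y) X"
proof -
  have a: "trace_op (adj Y ** J X) = trace_op (adj (Jd Y) ** X)"
    unfolding J_def Jd_def adj_sum matrix_sum_right matrix_sum_left trace_sum
    by (rule sum.cong) (simp_all add: trace_sandwich)
  have b: "trace_op (adj Y ** (X ** adj K)) = trace_op (adj K ** adj Y ** X)"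
    by (metis trace_rot matrix_mul_assoc)
  have c: "trace_op (adj Y ** (K ** X)) = trace_op (adj Y ** K ** X)"
    by (simp add: matrix_mul_assoc)
  show ?thesis
    unfolding hs_def D_form Ds_def
    by (simp add: matrix_add_ldistrib matrix_add_rdistrib adj_mult a b c)
qed


lemma comm_S: assumes "comm_all H h A U" shows "U ** S = S ** U"
proof -
  have "U ** (adj (h a) ** h a) = adj (h a) ** h a ** U" if "a \<in> A" for a
    using assms that unfolding comm_all_def by (metis matrix_mul_assoc)
  then show ?thesis unfolding S_def matrix_sum_left matrix_sum_right by (simp cong: sum.cong)
qed

lemma comm_H: "comm_all H h A U \<Longrightarrow> U ** H = H ** U"
  by (simp add: comm_all_def)

lemma comm_K: assumes "comm_all H h A U" shows "U ** K = K ** U"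
  unfolding K_def using comm_S[OF assms] comm_H[OF assms]
  by (simp add: matrix_diff_ldistrib matrix_diff_rdistrib mat_mult_assoc_comm)
     (metis mat_mult_assoc_comm matrix_mul_assoc)

lemma comm_adjK: assumes "comm_all H h A U" shows "U ** adj K = adj K ** U"
  unfolding adjK using comm_S[OF assms] comm_H[OF assms]
  by (simp add: matrix_diff_ldistrib matrix_diff_rdistrib mat_mult_assoc_comm)
     (metis mat_mult_assoc_comm matrix_mul_assoc)

lemma J_left: assumes "comm_all H h A U" shows "J (U ** X) = U ** J X"
proof -
  have "h a ** (U ** X) ** adj (h a) = U ** (h a ** X ** adj (h a))" if "a \<in> A" for a
    using assms that unfolding comm_all_def by (metis matrix_mul_assoc)
  then show ?thesis unfolding J_def matrix_sum_right by (simp cong: sum.cong)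
qed

lemma J_right: assumes "comm_all H h A U" shows "J (X ** U) = J X ** U"
proof -
  have "h a ** (X ** U) ** adj (h a) = h a ** X ** adj (h a) ** U" if "a \<in> A" for a
    using assms that unfolding comm_all_def by (metis matrix_mul_assoc)
  then show ?thesis unfolding J_def matrix_sum_left by (simp cong: sum.cong)
qed

lemma Jd_left: assumes "comm_all H h A U" shows "Jd (U ** X) = U ** Jd X"
proof -
  have "adj (h a) ** (U ** X) ** h a = U ** (adj (h a) ** X ** h a)" if "a \<in> A" for a
    using assms that unfolding comm_all_def by (metis matrix_mul_assoc)
  then show ?thesis unfolding Jd_def matrix_sum_right by (simp cong: sum.cong)
qed

lemma Jd_right: assumes "comm_all H h A U" shows "Jd (X ** U) = Jd X ** U"
proof -
  have "adj (h a) ** (X ** U) ** h a = adj (h a) ** X ** h a ** U" if "a \<in> A" for a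
    using assms that unfolding comm_all_def by (metis matrix_mul_assoc)
  then show ?thesis unfolding Jd_def matrix_sum_left by (simp cong: sum.cong)
qed

lemma D_left: assumes "comm_all H h A U" shows "D (U ** X) = U ** D X"
  unfolding D_form J_left[OF assms]
  by (simp add: matrix_add_ldistrib matrix_mul_assoc comm_K[OF assms])

lemma D_right: assumes "comm_all H h A U" shows "D (X ** U) = D X ** U"
  unfolding D_form J_right[OF assms]
  by (simp add: matrix_add_rdistrib matrix_mul_assoc comm_adjK[OF assms])
     (metis matrix_mul_assoc comm_adjK[OF assms])

lemma Ds_left: assumes "comm_all H h A U" shows "Ds (U ** X) = U ** Ds X"
  unfolding Ds_def Jd_left[OF assms]
  by (simp add: matrix_add_ldistrib matrix_mul_assoc comm_adjK[OF assms])

lemma Ds_right: assumes "comm_all H h A U" shows "Ds (X ** U) = Ds X ** U"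
  unfolding Ds_def Jd_right[OF assms]
  by (simp add: matrix_add_rdistrib matrix_mul_assoc comm_K[OF assms])
     (metis matrix_mul_assoc comm_K[OF assms])

lemma J_add: "J (X + Y) = J X + J Y"
  by (simp add: J_def matrix_add_ldistrib matrix_add_rdistrib sum.distrib)
lemma Jd_add: "Jd (X + Y) = Jd X + Jd Y"
  by (simp add: Jd_def matrix_add_ldistrib matrix_add_rdistrib sum.distrib)

lemma D_add: "D (X + Y) = D X + D Y"
  by (simp add: D_form J_add matrix_add_ldistrib matrix_add_rdistrib)
lemma Ds_add: "Ds (X + Y) = Ds X + Ds Y"
  by (simp add: Ds_def Jd_add matrix_add_ldistrib matrix_add_rdistrib)

lemma D_mat: "D (mat c ** X) = mat c ** D X"
  by (rule D_left[OF comm_all_mat])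
lemma Ds_mat: "Ds (mat c ** X) = mat c ** Ds X"
  by (rule Ds_left[OF comm_all_mat])

lemma linear_D: "linear D"
  by (rule linearI) (simp_all add: D_add scaleR_mat D_mat)
lemma linear_Ds: "linear Ds"
  by (rule linearI) (simp_all add: Ds_add scaleR_mat Ds_mat)

lemma D_zero [simp]: "D 0 = 0"
  using linear_0[OF linear_D] .
lemma Ds_zero [simp]: "Ds 0 = 0"
  using linear_0[OF linear_Ds] .
lemma D_diff: "D (X - Y) = D X - D Y"
  using linear_diff[OF linear_D] .
lemma Ds_diff: "Ds (X - Y) = Ds X - Ds Y"
  using linear_diff[OF linear_Ds] .
lemma D_uminus: "D (- X) = - D X"
  using linear_neg[OF linear_D] .

lemma Jd_one: "Jd (mat 1) = S"
  by (simp add: Jd_def S_def)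

lemma Ds_one: "Ds (mat 1) = 0"
proof -
  have "Ds (mat 1) = (K + adj K) + S" by (simp add: Ds_def Jd_one add_ac)
  then show ?thesis by (simp add: K_adjK)
qed

lemma Ds_comm_zero: assumes "comm_all H h A P" shows "Ds P = 0"
  using Ds_left[OF assms, of "mat 1"] by (simp add: Ds_one)

lemma trace_D: "trace_op (D X) = 0"
proof -
  have "trace_op (D X) = hs (mat 1) (D X)" by (simp add: hs_def)
  also have "\<dots> = hs (Ds (mat 1)) X" by (rule hs_D)
  finally show ?thesis by (simp add: Ds_one hs_def)
qed

lemma hs_Ds: "hs (Ds Y) X = hs Y (D X)"
  using hs_D by simp

lemma dissipation:
  "Ds (adj W ** W) - adj W ** Ds W - Ds (adj W) ** W
     = (\<Sum>a\<in>A. adj (h a ** W - W ** h a) ** (h a ** W - W ** h a))"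
proof -
  have 1: "Jd (adj W ** W) - adj W ** Jd W - Jd (adj W) ** W + adj W ** S ** W
      = (\<Sum>a\<in>A. adj (h a ** W - W ** h a) ** (h a ** W - W ** h a))"
    unfolding Jd_def S_def matrix_sum_right matrix_sum_left sum_subtractf[symmetric] sum.distrib[symmetric]
    by (rule sum.cong) (simp_all add: adj_mult matrix_diff_ldistrib matrix_diff_rdistrib matrix_mul_assoc algebra_simps)
  have 2: "adj W ** S ** W = - (adj W ** K ** W + adj W ** adj K ** W)"
    using K_adjK by (metis matrix_add_ldistrib matrix_add_rdistrib matrix_uminus_left matrix_uminus_right minus_minus)
  show ?thesis unfolding 1[symmetric] 2 Ds_def
    by (simp add: adj_mult matrix_add_ldistrib matrix_add_rdistrib matrix_mul_assoc algebra_simps)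
qed

end


section \<open>Complex subspaces and projectors\<close>

definition csub :: "(complex^'n::finite) set \<Rightarrow> bool" where
  "csub E \<longleftrightarrow> 0 \<in> E \<and> (\<forall>x\<in>E. \<forall>y\<in>E. x + y \<in> E) \<and> (\<forall>c. \<forall>x\<in>E. c *s x \<in> E)"

lemma scaleR_vec_eq: "r *\<^sub>R (v::complex^'n::finite) = of_real r *s v"
  unfolding vec_eq_iff by simp (metis scaleR_conv_of_real)

lemma csub_subspace: "csub E \<Longrightarrow> subspace E"
  unfolding csub_def subspace_def by (simp add: scaleR_vec_eq)

lemma csub_diff: "csub E \<Longrightarrow> x \<in> E \<Longrightarrow> y \<in> E \<Longrightarrow> x - y \<in> E"
  using csub_subspace subspace_diff by blast

lemma Re_cinner: "Re (cinner v w) = inner v w"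
  by (simp add: cinner_def inner_vec_def Re_sum inner_complex_def)

lemma Im_cinner: "Im (cinner v w) = inner (\<i> *s v) w"
  by (simp add: Re_cinner[symmetric] cinner_scale_left)

lemma cinner_ext: "(\<And>w. cinner w a = cinner w b) \<Longrightarrow> a = (b::complex^'n::finite)"
  by (metis cinner_diff_right cinner_self_zero eq_iff_diff_eq_0)

lemma proj_fun_exists:
  assumes E: "csub E"
  shows "\<exists>y\<in>E. \<forall>w\<in>E. cinner w (x - y) = 0"
proof -
  have sE: "span E = E" using csub_subspace[OF E] by (simp add: span_eq_iff)
  obtain y z where y: "y \<in> span E" and z: "\<And>w. w \<in> span E \<Longrightarrow> orthogonal z w" and xyz: "x = y + z"
    using orthogonal_subspace_decomp_exists[of E x] by blast
  have "cinner w (x - y) = 0" if w: "w \<in> E" for w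
  proof -
    have "x - y = z" using xyz by simp
    moreover have "inner w z = 0" using z w sE by (simp add: orthogonal_def inner_commute)
    moreover have "\<i> *s w \<in> E" using E w by (simp add: csub_def)
    then have "inner (\<i> *s w) z = 0" using z sE by (metis orthogonal_def inner_commute)
    ultimately show ?thesis by (simp add: complex_eq_iff Re_cinner Im_cinner)
  qed
  then show ?thesis using y sE by auto
qed

lemma proj_unique:
  assumes E: "csub E" and "y \<in> E" "\<forall>w\<in>E. cinner w (x - y) = 0"
    and "y' \<in> E" "\<forall>w\<in>E. cinner w (x - y') = 0"
  shows "y = y'"
proof -
  have d: "y' - y \<in> E" using assms csub_diff by blast
  have "cinner (y' - y) (y' - y) = cinner (y' - y) ((x - y) - (x - y'))" by simp
  also have "\<dots> = 0" using assms d by (simp add: cinner_diff_right)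
  finally show ?thesis by (simp add: cinner_self_zero)
qed

lemma proj_onto:
  assumes E: "csub (E::(complex^'n::finite) set)"
  obtains Q where "orth_proj Q" "\<And>v. Q *v v \<in> E" "\<And>v. v \<in> E \<Longrightarrow> Q *v v = v"
proof -
  define p where "p x = (SOME y. y \<in> E \<and> (\<forall>w\<in>E. cinner w (x - y) = 0))" for x
  have p: "p x \<in> E \<and> (\<forall>w\<in>E. cinner w (x - p x) = 0)" for x
  proof -
    have "\<exists>y. y \<in> E \<and> (\<forall>w\<in>E. cinner w (x - y) = 0)" using proj_fun_exists[OF E, of x] by blast
    then show ?thesis unfolding p_def by (rule someI_ex)
  qed
  have uniq: "y = p x" if "y \<in> E" "\<forall>w\<in>E. cinner w (x - y) = 0" for x y
    using proj_unique[OF E that] p by blast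
  have padd: "p (x + y) = p x + p y" for x y
  proof -
    have "p x + p y \<in> E" using p E by (simp add: csub_def)
    moreover have "\<forall>w\<in>E. cinner w (x + y - (p x + p y)) = 0"
    proof
      fix w assume "w \<in> E"
      then have "cinner w (x - p x) + cinner w (y - p y) = 0" using p by simp
      then show "cinner w (x + y - (p x + p y)) = 0"
        by (simp add: cinner_add_right[symmetric] algebra_simps)
    qed
    ultimately show ?thesis using uniq by metis
  qed
  have pscale: "p (c *s x) = c *s p x" for c x
  proof -
    have "c *s p x \<in> E" using p E by (simp add: csub_def)
    moreover have "\<forall>w\<in>E. cinner w (c *s x - c *s p x) = 0"
    proof
      fix w assume "w \<in> E"
      then have "c * cinner w (x - p x) = 0" using p by simp
      then show "cinner w (c *s x - c *s p x) = 0"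
        by (simp add: cinner_scale_right[symmetric] vector_ssub_ldistrib)
    qed
    ultimately show ?thesis using uniq by metis
  qed
  have lin: "Vector_Spaces.linear (*s) (*s) p"
    by unfold_locales (simp_all add: padd pscale)
  define Q where "Q = matrix p"
  have Qv: "Q *v x = p x" for x unfolding Q_def using matrix_works[OF lin] .
  have pfix: "p v = v" if "v \<in> E" for v
    using uniq[of v v] that by simp
  have sym: "cinner u (p v) = cinner (p u) v" for u v
  proof -
    have "cinner u (p v) = cinner (p u) (p v) + cinner (u - p u) (p v)"
      by (simp add: cinner_diff_left)
    also have "cinner (u - p u) (p v) = cnj (cinner (p v) (u - p u))" by (simp add: cinner_cnj)
    also have "\<dots> = 0" using p by simp
    also have "cinner (p u) v = cinner (p u) (p v) + cinner (p u) (v - p v)"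
      by (simp add: cinner_diff_right)
    moreover have "cinner (p u) (v - p v) = 0" using p by simp
    ultimately show ?thesis by simp
  qed
  have "adj Q = Q"
    unfolding matrix_eq
  proof
    fix u
    show "adj Q *v u = Q *v u"
    proof (rule cinner_ext)
      fix w
      have "cinner w (adj Q *v u) = cinner (Q *v w) u" by (simp add: cinner_adj)
      also have "\<dots> = cinner w (Q *v u)" by (simp add: Qv sym)
      finally show "cinner w (adj Q *v u) = cinner w (Q *v u)" .
    qed
  qed
  moreover have "Q ** Q = Q"
    unfolding matrix_eq by (simp add: matrix_vector_mul_assoc[symmetric] Qv pfix p)
  ultimately have "orth_proj Q" by (simp add: orth_proj_def)
  moreover have "Q *v v \<in> E" for v using p Qv by simp
  moreover have "v \<in> E \<Longrightarrow> Q *v v = v" for v using pfix Qv by simp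
  ultimately show ?thesis using that by blast
qed


lemma matrix_vector_sum_left: "(\<Sum>a\<in>S. f a) *v (v::complex^'n::finite) = (\<Sum>a\<in>S. f a *v v)"
  by (induction S rule: infinite_finite_induct) (auto simp: matrix_vector_mult_add_rdistrib)

lemma orth_projD: "orth_proj P \<Longrightarrow> adj P = P" "orth_proj P \<Longrightarrow> P ** P = P"
  by (simp_all add: orth_proj_def)

lemma QQ_left: "orth_proj Q \<Longrightarrow> Z ** Q ** Q = Z ** Q"
  by (metis matrix_mul_assoc orth_projD(2))

lemma compress_linear: "linear (\<lambda>Y. Q ** Y ** (Q::'n::finite op))"
  by (rule linearI) (simp_all add: matrix_add_ldistrib matrix_add_rdistrib scaleR_mat
      mat_mult_assoc_comm matrix_mul_assoc[symmetric])

context lind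
begin

lemma D_pow_bound: "\<exists>B>0. \<forall>k x. norm ((D ^^ k) x) \<le> B ^ k * norm x"
proof -
  have "bounded_linear D" using linear_D linear_conv_bounded_linear by blast
  then obtain B where B: "B > 0" "\<And>x. norm (D x) \<le> norm x * B"
    using bounded_linear.pos_bounded by blast
  have "norm ((D ^^ k) x) \<le> B ^ k * norm x" for k x
  proof (induction k)
    case 0 then show ?case by simp
  next
    case (Suc k)
    have "norm ((D ^^ Suc k) x) \<le> norm ((D ^^ k) x) * B" using B by simp
    also have "\<dots> \<le> B ^ k * norm x * B" using Suc B by (simp add: mult_right_mono)
    finally show ?case by (simp add: mult_ac)
  qed
  then show ?thesis using B by blast
qed

lemma semigroup_summable: "summable (\<lambda>k. (t ^ k / fact k) *\<^sub>R ((D ^^ k) x))"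
proof -
  obtain B where B: "B > 0" "\<And>k x. norm ((D ^^ k) x) \<le> B ^ k * norm x"
    using D_pow_bound by blast
  have g: "summable (\<lambda>k. norm x * (inverse (fact k) * (\<bar>t\<bar> * B) ^ k))"
    by (rule summable_mult) (rule summable_exp)
  have "norm ((t ^ k / fact k) *\<^sub>R ((D ^^ k) x)) \<le> norm x * (inverse (fact k) * (\<bar>t\<bar> * B) ^ k)" for k
  proof -
    have "norm ((t ^ k / fact k) *\<^sub>R ((D ^^ k) x)) = \<bar>t\<bar> ^ k / fact k * norm ((D ^^ k) x)"
      by (simp add: power_abs)
    also have "\<dots> \<le> \<bar>t\<bar> ^ k / fact k * (B ^ k * norm x)"
      using B by (intro mult_left_mono) auto
    also have "\<dots> = norm x * (inverse (fact k) * (\<bar>t\<bar> * B) ^ k)"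
      by (simp add: power_mult_distrib field_simps)
    finally show ?thesis .
  qed
  then show ?thesis
    by (intro summable_comparison_test[OF _ g]) auto
qed

lemma collecting_of_invariant:
  assumes Q: "orth_proj Q" and inv: "\<And>X. D (Q ** X ** Q) = Q ** D (Q ** X ** Q) ** Q"
  shows "collecting H h A Q"
proof -
  let ?C = "\<lambda>Y. Q ** Y ** Q"
  have CC: "?C (?C Y) = ?C Y" for Y
    using Q by (simp add: matrix_mul_assoc QQ_left) (metis matrix_mul_assoc orth_projD(2))
  have pow: "?C ((D ^^ k) (?C X)) = (D ^^ k) (?C X)" for k X
  proof (induction k)
    case 0 then show ?case by (simp add: CC)
  next
    case (Suc k)
    have "(D ^^ Suc k) (?C X) = D ((D ^^ k) (?C X))" by simp
    also have "\<dots> = D (?C ((D ^^ k) (?C X)))" using Suc by metis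
    also have "\<dots> = ?C (D (?C ((D ^^ k) (?C X))))" by (rule inv)
    also have "\<dots> = ?C (D ((D ^^ k) (?C X)))" using Suc by metis
    finally have eq: "(D ^^ Suc k) (?C X) = ?C (D ((D ^^ k) (?C X)))" .
    show ?case by (simp only: eq CC)
  qed
  have bl: "bounded_linear ?C" using compress_linear linear_conv_bounded_linear by blast
  have "semigroup H h A t (?C \<sigma>) = ?C (semigroup H h A t (?C \<sigma>))" for t \<sigma>
  proof -
    have "?C (semigroup H h A t (?C \<sigma>)) = (\<Sum>k. ?C ((t ^ k / fact k) *\<^sub>R ((D ^^ k) (?C \<sigma>))))"
      unfolding semigroup_def by (rule bounded_linear.suminf[OF bl semigroup_summable])
    also have "\<dots> = semigroup H h A t (?C \<sigma>)"
      unfolding semigroup_def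
      by (rule suminf_cong) (simp add: linear_cmul[OF compress_linear] pow)
    finally show ?thesis by simp
  qed
  then show ?thesis using Q by (simp add: collecting_def)
qed

lemma D_compress_invariant:
  assumes Q: "orth_proj Q" and KQ: "Q ** K ** Q = K ** Q"
    and hQ: "\<And>a. a \<in> A \<Longrightarrow> Q ** h a ** Q = h a ** Q"
  shows "D (Q ** X ** Q) = Q ** D (Q ** X ** Q) ** Q"
proof -
  have aQ: "adj Q = Q" "Q ** Q = Q" using Q by (simp_all add: orth_projD)
  have KQ': "Z ** Q ** K ** Q = Z ** K ** Q" for Z by (metis KQ matrix_mul_assoc)
  have aKQ: "Q ** adj K ** Q = Q ** adj K"
    using arg_cong[OF KQ, of adj] by (simp add: adj_mult aQ matrix_mul_assoc)
  have aKQ': "Z ** Q ** adj K ** Q = Z ** Q ** adj K" for Z by (metis aKQ matrix_mul_assoc)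
  have hQ': "Z ** Q ** h a ** Q = Z ** h a ** Q" if "a \<in> A" for Z a by (metis hQ[OF that] matrix_mul_assoc)
  have ahQ: "Q ** adj (h a) ** Q = Q ** adj (h a)" if "a \<in> A" for a
    using arg_cong[OF hQ[OF that], of adj] by (simp add: adj_mult aQ matrix_mul_assoc)
  have ahQ': "Z ** Q ** adj (h a) ** Q = Z ** Q ** adj (h a)" if "a \<in> A" for Z a
    by (metis ahQ[OF that] matrix_mul_assoc)
  have QQ: "Z ** Q ** Q = Z ** Q" for Z using QQ_left[OF Q] .
  have J: "Q ** J (Q ** X ** Q) ** Q = J (Q ** X ** Q)"
    unfolding J_def matrix_sum_left matrix_sum_right
    by (rule sum.cong) (simp_all add: matrix_mul_assoc QQ hQ' ahQ' hQ ahQ aQ)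
  show ?thesis
    unfolding D_form
    by (simp add: matrix_add_ldistrib matrix_add_rdistrib J[unfolded matrix_mul_assoc])
       (simp add: matrix_mul_assoc QQ KQ' KQ aKQ' aKQ aQ)
qed

lemma irr_subspace:
  assumes irr: "no_proper_collecting H h A P" and P: "orth_proj P"
    and E: "csub E" and EP: "\<And>v. v \<in> E \<Longrightarrow> P *v v = v" and v0: "v0 \<in> E" "v0 \<noteq> 0"
    and invK: "\<And>v. v \<in> E \<Longrightarrow> K *v v \<in> E"
    and invh: "\<And>a v. a \<in> A \<Longrightarrow> v \<in> E \<Longrightarrow> h a *v v \<in> E"
  shows "P *v v \<in> E"
proof -
  obtain Q where Q: "orth_proj Q" "\<And>v. Q *v v \<in> E" "\<And>v. v \<in> E \<Longrightarrow> Q *v v = v"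
    using proj_onto[OF E] by blast
  have PQ: "P ** Q = Q"
    unfolding matrix_eq by (simp add: matrix_vector_mul_assoc[symmetric] EP Q)
  have Qne: "Q \<noteq> 0" using Q(3)[OF v0(1)] v0(2) by auto
  have KQ: "Q ** K ** Q = K ** Q"
    unfolding matrix_eq by (simp add: matrix_vector_mul_assoc[symmetric] Q invK)
  have hQ: "Q ** h a ** Q = h a ** Q" if "a \<in> A" for a
    unfolding matrix_eq by (simp add: matrix_vector_mul_assoc[symmetric] Q invh that)
  have "collecting H h A Q"
    by (rule collecting_of_invariant[OF Q(1)]) (rule D_compress_invariant[OF Q(1) KQ hQ])
  then have "Q = P" using irr Q(1) PQ Qne unfolding no_proper_collecting_def by blast
  then show ?thesis using Q(2) by metis
qed


lemma Ds_vec: assumes "Y *v v = 0"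
  shows "Ds Y *v v = Y *v (K *v v) + (\<Sum>a\<in>A. adj (h a) *v (Y *v (h a *v v)))"
  using assms
  by (simp add: Ds_def Jd_def matrix_vector_mult_add_rdistrib matrix_vector_sum_left
      matrix_vector_mul_assoc[symmetric])

lemma cinner_sum_right: "cinner v (\<Sum>a\<in>I. f a) = (\<Sum>a\<in>I. cinner v (f a))"
  by (induction I rule: infinite_finite_induct) (auto simp: cinner_add_right)

lemma Ds_quad: assumes Yh: "Y = adj Y" and Yv: "Y *v v = 0"
  shows "cinner v (Ds Y *v v) = (\<Sum>a\<in>A. cinner (h a *v v) (Y *v (h a *v v)))"
proof -
  have "cinner v (Y *v (K *v v)) = 0"
    by (metis Yh Yv cinner_adj cinner_zero_left)
  moreover have "cinner v (adj (h a) *v w) = cinner (h a *v v) w" for a w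
    by (simp add: cinner_adj)
  ultimately show ?thesis
    by (simp add: Ds_vec[OF Yv] cinner_add_right cinner_sum_right)
qed

end

lemma cinner_scaleR_quad: "cinner (r *\<^sub>R u) (M *v (r *\<^sub>R u)) = of_real (r^2) * cinner u (M *v u)"
  by (simp add: scaleR_vec_eq matrix_vector_scale cinner_scale_left cinner_scale_right power2_eq_square)

lemma mv_uminus: "(- M) *v v = - (M *v (v::complex^'n::finite))"
  by (simp add: matrix_vector_mult_def vec_eq_iff sum_negf)

lemma cinner_uminus_right: "cinner v (- w) = - cinner v w"
  by (simp add: cinner_def sum_negf)

lemma mv_scaleR: "A *v (r *\<^sub>R x) = r *\<^sub>R (A *v (x::complex^'n::finite))"
  by (simp add: scaleR_vec_eq matrix_vector_scale)

lemma mat_of_real_herm: "P = adj P \<Longrightarrow> adj (mat (of_real l) ** P) = mat (of_real l) ** P"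
  by (simp add: adj_mult mat_mult_comm)

context lind
begin

lemma herm_block_scalar:
  assumes irr: "no_proper_collecting H h A P" and P: "orth_proj P" and Pne: "P \<noteq> 0"
    and cP: "comm_all H h A P"
    and Zh: "Z = adj Z" and ZP: "Z = P ** Z ** P" and pos: "psd_op (Ds Z)"
  shows "\<exists>l::real. Z = mat (of_real l) ** P"
proof -
  have aP: "adj P = P" "P ** P = P" using P by (simp_all add: orth_projD)
  have PPv: "P *v (P *v u) = P *v u" for u by (simp add: matrix_vector_mul_assoc aP)
  let ?F = "\<lambda>v. Re (cinner v (Z *v v))"
  let ?T = "{v. P *v v = v} \<inter> sphere (0::complex^'n) 1"
  have cT: "compact ?T"
    by (intro closed_Int_compact compact_sphere closed_Collect_eq) (auto intro: continuous_intros)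
  obtain u where u: "P *v u \<noteq> 0" using Pne matrix_eq[of P 0] by auto
  define v1 where "v1 = (1 / norm (P *v u)) *\<^sub>R (P *v u)"
  have "v1 \<in> ?T" using u by (simp add: v1_def mv_scaleR PPv)
  then have neT: "?T \<noteq> {}" by blast
  have contF: "continuous_on ?T ?F"
    unfolding cinner_def by (intro continuous_intros)
  obtain v0 where v0: "v0 \<in> ?T" and v0max: "\<And>v. v \<in> ?T \<Longrightarrow> ?F v \<le> ?F v0"
    using continuous_attains_sup[OF cT neT contF] by blast
  define l where "l = ?F v0"
  define Y where "Y = mat (of_real l) ** P - Z"
  have Yh: "Y = adj Y" using Zh aP unfolding Y_def by (simp add: adj_mult mat_mult_comm)
  have m: "P ** (mat (of_real l) ** P) ** P = mat (of_real l) ** P"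
    by (metis mat_mult_assoc_comm matrix_mul_assoc aP(2))
  have YP: "Y = P ** Y ** P"
    unfolding Y_def by (simp add: matrix_diff_ldistrib matrix_diff_rdistrib m ZP[symmetric])
  have Pu: "cinner w (Y *v w) = cinner (P *v w) (Y *v (P *v w))" for w
  proof -
    have "cinner w (Y *v w) = cinner w (P *v (Y *v (P *v w)))"
      by (subst YP) (simp add: matrix_vector_mul_assoc matrix_mul_assoc)
    also have "\<dots> = cinner (P *v w) (Y *v (P *v w))" by (simp add: cinner_adj aP)
    finally show ?thesis .
  qed
  have Yfix: "cinner u (Y *v u) = of_real l * of_real (norm u ^ 2) - cinner u (Z *v u)"
    if "P *v u = u" for u
    using that by (simp add: Y_def matrix_vector_mult_diff_rdistrib matrix_vector_mul_assoc[symmetric]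
        mat_vector_mult cinner_diff_right cinner_scale_right cinner_self)
  have psdY: "psd_op Y"
    unfolding psd_op_iff
  proof (intro conjI allI)
    show "Y = adj Y" by (rule Yh)
    fix w
    let ?u = "P *v w"
    show "0 \<le> Re (cinner w (Y *v w))"
    proof (cases "?u = 0")
      case True then show ?thesis using Pu[of w] by simp
    next
      case False
      define v where "v = (1 / norm ?u) *\<^sub>R ?u"
      have vT: "v \<in> ?T" using False by (simp add: v_def mv_scaleR PPv)
      have "?F v = (1 / norm ?u)^2 * Re (cinner ?u (Z *v ?u))"
        unfolding v_def cinner_scaleR_quad by simp
      then have "(1 / norm ?u)^2 * Re (cinner ?u (Z *v ?u)) \<le> l"
        using v0max[OF vT] l_def by simp
      then have "Re (cinner ?u (Z *v ?u)) \<le> l * norm ?u ^ 2"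
        using False by (simp add: field_simps)
      moreover have "cinner ?u (Y *v ?u) = of_real l * of_real (norm ?u ^ 2) - cinner ?u (Z *v ?u)"
        by (rule Yfix) (rule PPv)
      ultimately show ?thesis unfolding Pu[of w] by simp
    qed
  qed
  have v0P: "P *v v0 = v0" and v0n: "norm v0 = 1" using v0 by auto
  have "Re (cinner v0 (Y *v v0)) = 0" using Yfix[OF v0P] v0n l_def by simp
  then have Yv0: "Y *v v0 = 0" using psd_kernel[OF psdY] by blast
  define E where "E = {v. P *v v = v \<and> Y *v v = 0}"
  have csE: "csub E"
    unfolding csub_def E_def
    by (simp add: matrix_vector_right_distrib matrix_vector_scale vector_add_ldistrib)
  have v0E: "v0 \<in> E" "v0 \<noteq> 0" using v0P Yv0 v0n by (auto simp: E_def)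
  have DsZ: "Ds Z = - Ds Y"
  proof -
    have "Z = mat (of_real l) ** P - Y" by (simp add: Y_def)
    then have "Ds Z = mat (of_real l) ** Ds P - Ds Y" by (simp add: Ds_diff Ds_mat)
    then show ?thesis by (simp add: Ds_comm_zero[OF cP])
  qed
  have Ph: "P *v (h a *v v) = h a *v (P *v v)" if "a \<in> A" for a v
    using cP that unfolding comm_all_def by (simp add: matrix_vector_mul_assoc)
  have PK: "P *v (K *v v) = K *v (P *v v)" for v
    by (simp add: matrix_vector_mul_assoc comm_K[OF cP])
  have inv: "(\<forall>a\<in>A. h a *v v \<in> E) \<and> K *v v \<in> E" if vE: "v \<in> E" for v
  proof -
    have vP: "P *v v = v" and Yv: "Y *v v = 0" using vE by (auto simp: E_def)
    have q: "cinner v (Ds Y *v v) = (\<Sum>a\<in>A. cinner (h a *v v) (Y *v (h a *v v)))"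
      by (rule Ds_quad[OF Yh Yv])
    have nn: "0 \<le> Re (cinner (h a *v v) (Y *v (h a *v v)))" for a
      using psdY by (simp add: psd_op_iff)
    have eqR: "Re (cinner v (Ds Z *v v)) = - (\<Sum>a\<in>A. Re (cinner (h a *v v) (Y *v (h a *v v))))"
      by (simp add: DsZ mv_uminus cinner_uminus_right q Re_sum)
    have "0 \<le> Re (cinner v (Ds Z *v v))" using pos by (simp add: psd_op_iff)
    then have le: "(\<Sum>a\<in>A. Re (cinner (h a *v v) (Y *v (h a *v v)))) \<le> 0"
      unfolding eqR by simp
    then have s0: "(\<Sum>a\<in>A. Re (cinner (h a *v v) (Y *v (h a *v v)))) = 0"
      using sum_nonneg[of A "\<lambda>a. Re (cinner (h a *v v) (Y *v (h a *v v)))"] nn by force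
    have hE: "h a *v v \<in> E" if a: "a \<in> A" for a
    proof -
      have "Re (cinner (h a *v v) (Y *v (h a *v v))) = 0"
        using s0 sum_nonneg_eq_0_iff[OF finA, of "\<lambda>a. Re (cinner (h a *v v) (Y *v (h a *v v)))"] nn a
        by blast
      then have "Y *v (h a *v v) = 0" using psd_kernel[OF psdY] by blast
      then show ?thesis using Ph[OF a] vP by (simp add: E_def)
    qed
    have "Re (cinner v (Ds Z *v v)) = 0"
      using s0 eqR by simp
    then have "Ds Z *v v = 0" using psd_kernel[OF pos] by blast
    then have "Ds Y *v v = 0" by (simp add: DsZ mv_uminus)
    moreover have "(\<Sum>a\<in>A. adj (h a) *v (Y *v (h a *v v))) = 0"
      using hE by (simp add: E_def)
    ultimately have "Y *v (K *v v) = 0" by (simp add: Ds_vec[OF Yv])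
    then have "K *v v \<in> E" using PK vP by (simp add: E_def)
    then show ?thesis using hE by blast
  qed
  have allE: "P *v w \<in> E" for w
    by (rule irr_subspace[OF irr P csE _ v0E]) (use inv in \<open>auto simp: E_def\<close>)
  have "Y ** P = 0"
    unfolding matrix_eq using allE by (simp add: E_def matrix_vector_mul_assoc[symmetric])
  then have "Y = 0" using YP by (metis matrix_mul_assoc times0_right)
  then show ?thesis unfolding Y_def by (metis eq_iff_diff_eq_0)
qed


lemma block_kernel_scalar:
  assumes irr: "no_proper_collecting H h A P" and P: "orth_proj P" and Pne: "P \<noteq> 0"
    and cP: "comm_all H h A P"
    and ZP: "Z = P ** Z ** P" and DZ: "Ds Z = 0"
  shows "\<exists>c. Z = mat c ** P"
proof -
  have aP: "adj P = P" using P by (simp add: orth_projD)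
  define Z1 where "Z1 = mat (1/2) ** (Z + adj Z)"
  define Z2 where "Z2 = mat (- \<i>/2) ** (Z - adj Z)"
  have DaZ: "Ds (adj Z) = 0" using DZ by (metis adj_Ds adj_zero)
  have aZP: "adj Z = P ** adj Z ** P"
    using arg_cong[OF ZP, of adj] by (simp add: adj_mult aP matrix_mul_assoc)
  have cmP: "P ** (mat c ** X) ** P = mat c ** (P ** X ** P)" for c X
    by (simp only: mat_mult_assoc_comm) (simp add: matrix_mul_assoc)
  have h1: "Z1 = adj Z1"
    unfolding Z1_def by (simp add: adj_mult mat_mult_comm add.commute)
  have h2: "Z2 = adj Z2"
  proof -
    have "adj Z2 = (adj Z - Z) ** mat (\<i>/2)" unfolding Z2_def by (simp add: adj_mult)
    also have "\<dots> = mat (- \<i>/2) ** (Z - adj Z)"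
      by (simp add: mat_mult_comm[symmetric] matrix_diff_ldistrib mat_neg_mult)
    finally show ?thesis unfolding Z2_def by simp
  qed
  have b1: "Z1 = P ** Z1 ** P" unfolding Z1_def cmP
    by (simp add: matrix_add_ldistrib matrix_add_rdistrib ZP[symmetric] aZP[symmetric])
  have b2: "Z2 = P ** Z2 ** P" unfolding Z2_def cmP
    by (simp add: matrix_diff_ldistrib matrix_diff_rdistrib ZP[symmetric] aZP[symmetric])
  have d1: "Ds Z1 = 0" unfolding Z1_def by (simp add: Ds_mat Ds_add DZ DaZ)
  have d2: "Ds Z2 = 0" unfolding Z2_def by (simp add: Ds_mat Ds_diff DZ DaZ)
  obtain l1 where l1: "Z1 = mat (of_real l1) ** P"
    using herm_block_scalar[OF irr P Pne cP h1 b1] d1 psd_zero by auto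
  obtain l2 where l2: "Z2 = mat (of_real l2) ** P"
    using herm_block_scalar[OF irr P Pne cP h2 b2] d2 psd_zero by auto
  have "Z = Z1 + mat \<i> ** Z2"
  proof -
    have "Z1 + mat \<i> ** Z2 = mat (1/2) ** (Z + adj Z) + mat (1/2) ** (Z - adj Z)"
      unfolding Z1_def Z2_def by (simp add: matrix_mul_assoc)
    also have "\<dots> = mat (1/2) ** (Z + Z)"
      by (simp add: matrix_add_ldistrib[symmetric])
    also have "\<dots> = Z" by (simp only: matrix_add_ldistrib matrix_add_rdistrib[symmetric] mat_add) simp
    finally show ?thesis by simp
  qed
  also have "\<dots> = mat (of_real l1 + \<i> * of_real l2) ** P"
    by (simp add: l1 l2 matrix_mul_assoc matrix_add_rdistrib[symmetric] mat_add)
  finally show ?thesis by blast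
qed

lemma comm_of_kernel:
  assumes irr: "no_proper_collecting H h A Q" and Q: "orth_proj Q" and Qne: "Q \<noteq> 0"
    and cQ: "comm_all H h A Q" and P: "orth_proj P"
    and W: "W = P ** W ** Q" and DW: "Ds W = 0"
  shows "\<forall>a\<in>A. h a ** W = W ** h a"
proof -
  have aQ: "adj Q = Q" "Q ** Q = Q" using Q by (simp_all add: orth_projD)
  have WQ: "W ** Q = W" by (metis W QQ_left[OF Q])
  have QaW: "Q ** adj W = adj W" using arg_cong[OF WQ, of adj] by (simp add: adj_mult aQ)
  define Z where "Z = adj W ** W"
  have Zh: "Z = adj Z" by (simp add: Z_def adj_mult)
  have ZQ: "Z = Q ** Z ** Q"
    unfolding Z_def by (metis QaW WQ matrix_mul_assoc)
  have DaW: "Ds (adj W) = 0" using DW by (metis adj_Ds adj_zero)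
  have DZ: "Ds Z = (\<Sum>a\<in>A. adj (h a ** W - W ** h a) ** (h a ** W - W ** h a))"
    using dissipation[of W] by (simp add: Z_def DW DaW)
  have "psd_op (Ds Z)" unfolding DZ by (intro psd_sum psd_adj_mult)
  then obtain l where "Z = mat (of_real l) ** Q"
    using herm_block_scalar[OF irr Q Qne cQ Zh ZQ] by blast
  then have "Ds Z = 0" by (simp add: Ds_mat Ds_comm_zero[OF cQ])
  then have z: "(\<Sum>a\<in>A. adj (h a ** W - W ** h a) ** (h a ** W - W ** h a)) = 0" using DZ by simp
  have "h a ** W - W ** h a = 0" if "a \<in> A" for a
    by (rule sum_adj_mult_zero[OF finA z that])
  then show ?thesis by simp
qed

lemma comm_all_of_kernel:
  assumes irrP: "no_proper_collecting H h A P" and P: "orth_proj P" and Pne: "P \<noteq> 0"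
    and cP: "comm_all H h A P"
    and irrQ: "no_proper_collecting H h A Q" and Q: "orth_proj Q" and Qne: "Q \<noteq> 0"
    and cQ: "comm_all H h A Q"
    and W: "W = P ** W ** Q" and DW: "Ds W = 0"
  shows "comm_all H h A W"
proof -
  have aP: "adj P = P" using P by (simp add: orth_projD)
  have aQ: "adj Q = Q" using Q by (simp add: orth_projD)
  have c1: "\<forall>a\<in>A. h a ** W = W ** h a" by (rule comm_of_kernel[OF irrQ Q Qne cQ P W DW])
  have aW: "adj W = Q ** adj W ** P"
    using arg_cong[OF W, of adj] by (simp add: adj_mult aP aQ matrix_mul_assoc)
  have DaW: "Ds (adj W) = 0" using DW by (metis adj_Ds adj_zero)
  have c2': "\<forall>a\<in>A. h a ** adj W = adj W ** h a" by (rule comm_of_kernel[OF irrP P Pne cP Q aW DaW])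
  have c2: "W ** adj (h a) = adj (h a) ** W" if "a \<in> A" for a
    using arg_cong[OF c2'[rule_format, OF that], of adj] by (simp add: adj_mult)
  have JdW: "Jd W = S ** W"
    unfolding Jd_def S_def matrix_sum_left
    by (rule sum.cong) (simp_all add: c1 matrix_mul_assoc[symmetric])
  have SW: "W ** S = S ** W"
  proof -
    have "W ** (adj (h a) ** h a) = adj (h a) ** h a ** W" if "a \<in> A" for a
      using c1 c2[OF that] that by (metis matrix_mul_assoc)
    then show ?thesis unfolding S_def matrix_sum_left matrix_sum_right by (simp cong: sum.cong)
  qed
  have aKS: "adj K + S = - K"
  proof -
    have "adj K + S = adj K - (K + adj K)" using K_adjK by simp
    then show ?thesis by simp
  qed
  have e: "Ds W = (adj K + S) ** W + W ** K" by (simp add: Ds_def JdW matrix_add_rdistrib add_ac)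
  then have "(adj K + S) ** W + W ** K = 0" using DW by simp
  then have "- (K ** W) + W ** K = 0" by (simp add: aKS)
  then have KW: "W ** K = K ** W" by (metis add.commute eq_neg_iff_add_eq_0 minus_minus)
  have "mat (- \<i>) ** (W ** H) = mat (- \<i>) ** (H ** W)"
  proof -
    have "W ** K = mat (- \<i>) ** (W ** H) - mat (1/2) ** (W ** S)"
      by (simp add: K_def matrix_diff_ldistrib mat_mult_assoc_comm)
    moreover have "K ** W = mat (- \<i>) ** (H ** W) - mat (1/2) ** (S ** W)"
      by (simp add: K_def matrix_diff_rdistrib matrix_mul_assoc)
    ultimately show ?thesis using KW SW by simp
  qed
  then have "mat \<i> ** (mat (- \<i>) ** (W ** H)) = mat \<i> ** (mat (- \<i>) ** (H ** W))" by simp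
  then have WH: "W ** H = H ** W" by (simp add: matrix_mul_assoc)
  show ?thesis unfolding comm_all_def using WH c1 c2 by auto
qed

end


lemma hs_add_left: "hs (X + Y) Z = hs X Z + hs Y Z"
  by (simp add: hs_def matrix_add_rdistrib)
lemma hs_add_right: "hs Z (X + Y) = hs Z X + hs Z Y"
  by (simp add: hs_def matrix_add_ldistrib)
lemma hs_diff_left: "hs (X - Y) Z = hs X Z - hs Y Z"
  by (simp add: hs_def matrix_diff_rdistrib)
lemma hs_diff_right: "hs Z (X - Y) = hs Z X - hs Z Y"
  by (simp add: hs_def matrix_diff_ldistrib)
lemma hs_mat_left: "hs (mat c ** X) Y = cnj c * hs X Y"
  by (simp add: hs_def adj_mult mat_mult_comm[symmetric] matrix_mul_assoc[symmetric] trace_mat_mult)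
lemma hs_mat_right: "hs X (mat c ** Y) = c * hs X Y"
  by (simp add: hs_def mat_mult_assoc_comm trace_mat_mult)
lemma hs_zero_left [simp]: "hs 0 Y = 0"
  by (simp add: hs_def)
lemma hs_zero_right [simp]: "hs Y 0 = 0"
  by (simp add: hs_def)

lemma hs_compress:
  fixes P Q X Y :: "'n::finite op"
  assumes "adj P = P" "adj Q = Q"
  shows "hs (P ** X ** Q) Y = hs X (P ** Y ** Q)"
proof -
  have "hs (P ** X ** Q) Y = trace_op (Q ** (adj X ** P ** Y))"
    using assms by (simp add: hs_def adj_mult matrix_mul_assoc)
  also have "\<dots> = trace_op ((adj X ** P ** Y) ** Q)" by (rule trace_comm)
  also have "\<dots> = hs X (P ** Y ** Q)" by (simp add: hs_def matrix_mul_assoc)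
  finally show ?thesis .
qed

lemma trace_proj_nonzero:
  assumes "orth_proj P" "P \<noteq> 0" shows "trace_op P \<noteq> 0"
proof -
  have "trace_op P = hs P P" using assms by (simp add: hs_def orth_projD)
  then show ?thesis by (metis assms(2) hs_self_zero)
qed

context lind
begin

definition Fm where "Fm P Q X = D (P ** X ** Q) + (X - P ** X ** Q)"
definition Gm where "Gm P Q Y = Ds (P ** Y ** Q) + (Y - P ** Y ** Q)"

lemma compress_mat:
  fixes P Q X :: "'n op"
  shows "P ** (mat c ** X) ** Q = mat c ** (P ** X ** Q)"
  by (simp only: mat_mult_assoc_comm) (simp add: matrix_mul_assoc)

lemma Fm_mat: "Fm P Q (mat c ** X) = mat c ** Fm P Q X"
  by (simp add: Fm_def compress_mat D_mat matrix_add_ldistrib matrix_diff_ldistrib)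
lemma Gm_mat: "Gm P Q (mat c ** X) = mat c ** Gm P Q X"
  by (simp add: Gm_def compress_mat Ds_mat matrix_add_ldistrib matrix_diff_ldistrib)

lemma linear_Fm: "linear (Fm P Q)"
  by (rule linearI)
     (simp_all add: Fm_def matrix_add_ldistrib matrix_add_rdistrib D_add scaleR_mat Fm_mat[unfolded Fm_def])
lemma linear_Gm: "linear (Gm P Q)"
  by (rule linearI)
     (simp_all add: Gm_def matrix_add_ldistrib matrix_add_rdistrib Ds_add scaleR_mat Gm_mat[unfolded Gm_def])

lemma Fm_adj:
  assumes P: "orth_proj P" and Q: "orth_proj Q" and cP: "comm_all H h A P" and cQ: "comm_all H h A Q"
  shows "hs (Fm P Q X) Y = hs X (Gm P Q Y)"
proof -
  have aP: "adj P = P" and aQ: "adj Q = Q" using P Q by (simp_all add: orth_projD)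
  have "hs (D (P ** X ** Q)) Y = cnj (hs Y (D (P ** X ** Q)))" by (simp add: hs_cnj)
  also have "\<dots> = cnj (hs (Ds Y) (P ** X ** Q))" by (simp add: hs_D)
  also have "\<dots> = hs (P ** X ** Q) (Ds Y)" by (simp add: hs_cnj)
  also have "\<dots> = hs X (P ** Ds Y ** Q)" by (rule hs_compress[OF aP aQ])
  also have "P ** Ds Y ** Q = Ds (P ** Y ** Q)" by (simp add: Ds_left[OF cP] Ds_right[OF cQ])
  finally have 1: "hs (D (P ** X ** Q)) Y = hs X (Ds (P ** Y ** Q))" .
  have 2: "hs (P ** X ** Q) Y = hs X (P ** Y ** Q)" by (rule hs_compress[OF aP aQ])
  show ?thesis unfolding Fm_def Gm_def
    by (simp add: hs_add_left hs_add_right hs_diff_left hs_diff_right 1 2)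
qed

lemma Fm_zero_iff:
  assumes P: "orth_proj P" and Q: "orth_proj Q" and cP: "comm_all H h A P" and cQ: "comm_all H h A Q"
  shows "Fm P Q X = 0 \<longleftrightarrow> X = P ** X ** Q \<and> D X = 0"
proof
  have PP: "P ** P = P" and QQ: "Q ** Q = Q" using P Q by (simp_all add: orth_projD)
  have CC: "P ** (P ** Y ** Q) ** Q = P ** Y ** Q" for Y
    by (metis PP QQ matrix_mul_assoc)
  have CD: "P ** D Y ** Q = D (P ** Y ** Q)" for Y by (simp add: D_left[OF cP] D_right[OF cQ])
  assume F0: "Fm P Q X = 0"
  then have "P ** (Fm P Q X) ** Q = 0" by simp
  then have "D (P ** X ** Q) = 0"
    unfolding Fm_def by (simp add: matrix_add_ldistrib matrix_add_rdistrib matrix_diff_ldistrib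
        matrix_diff_rdistrib CD CC)
  moreover from this F0 have "X = P ** X ** Q" by (simp add: Fm_def)
  ultimately show "X = P ** X ** Q \<and> D X = 0" by simp
next
  assume "X = P ** X ** Q \<and> D X = 0"
  then show "Fm P Q X = 0" unfolding Fm_def by (metis add.right_neutral diff_self)
qed

lemma Gm_zero_iff:
  assumes P: "orth_proj P" and Q: "orth_proj Q" and cP: "comm_all H h A P" and cQ: "comm_all H h A Q"
  shows "Gm P Q X = 0 \<longleftrightarrow> X = P ** X ** Q \<and> Ds X = 0"
proof
  have PP: "P ** P = P" and QQ: "Q ** Q = Q" using P Q by (simp_all add: orth_projD)
  have CC: "P ** (P ** Y ** Q) ** Q = P ** Y ** Q" for Y
    by (metis PP QQ matrix_mul_assoc)
  have CD: "P ** Ds Y ** Q = Ds (P ** Y ** Q)" for Y by (simp add: Ds_left[OF cP] Ds_right[OF cQ])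
  assume F0: "Gm P Q X = 0"
  then have "P ** (Gm P Q X) ** Q = 0" by simp
  then have "Ds (P ** X ** Q) = 0"
    unfolding Gm_def by (simp add: matrix_add_ldistrib matrix_add_rdistrib matrix_diff_ldistrib
        matrix_diff_rdistrib CD CC)
  moreover from this F0 have "X = P ** X ** Q" by (simp add: Gm_def)
  ultimately show "X = P ** X ** Q \<and> Ds X = 0" by simp
next
  assume "X = P ** X ** Q \<and> Ds X = 0"
  then show "Gm P Q X = 0" unfolding Gm_def by (metis add.right_neutral diff_self)
qed

lemma dual_kernel_exists:
  assumes P: "orth_proj P" and Q: "orth_proj Q" and cP: "comm_all H h A P" and cQ: "comm_all H h A Q"
    and X: "X \<noteq> 0" "X = P ** X ** Q" "D X = 0"
  shows "\<exists>W. W \<noteq> 0 \<and> W = P ** W ** Q \<and> Ds W = 0"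
proof -
  have "\<not> inj (Fm P Q)"
    using X Fm_zero_iff[OF P Q cP cQ, of X] linear_inj_iff[OF linear_Fm] by blast
  then have "\<not> inj (Gm P Q)"
    using inj_from_adj[OF linear_Fm Fm_adj[OF P Q cP cQ]] by blast
  then obtain W where "W \<noteq> 0" "Gm P Q W = 0" using linear_inj_iff[OF linear_Gm] by blast
  then show ?thesis using Gm_zero_iff[OF P Q cP cQ] by blast
qed

lemma kernel_exists_from_dual:
  assumes P: "orth_proj P" and Q: "orth_proj Q" and cP: "comm_all H h A P" and cQ: "comm_all H h A Q"
    and W: "W \<noteq> 0" "W = P ** W ** Q" "Ds W = 0"
  shows "\<exists>X. X \<noteq> 0 \<and> X = P ** X ** Q \<and> D X = 0"
proof -
  have "\<not> inj (Gm P Q)"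
    using W Gm_zero_iff[OF P Q cP cQ, of W] linear_inj_iff[OF linear_Gm] by blast
  moreover have "hs (Gm P Q Y) X = hs Y (Fm P Q X)" for X Y
    using Fm_adj[OF P Q cP cQ, of X Y] by (metis hs_cnj)
  ultimately have "\<not> inj (Fm P Q)"
    using inj_from_adj[OF linear_Gm] by blast
  then obtain X where "X \<noteq> 0" "Fm P Q X = 0" using linear_inj_iff[OF linear_Fm] by blast
  then show ?thesis using Fm_zero_iff[OF P Q cP cQ] by blast
qed

lemma kernel_unique:
  assumes irr: "no_proper_collecting H h A P" and P: "orth_proj P" and Pne: "P \<noteq> 0"
    and cP: "comm_all H h A P"
    and rho: "\<rho> = P ** \<rho> ** P" "D \<rho> = 0" "trace_op \<rho> = 1"
    and X: "X = P ** X ** P" "D X = 0"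
  shows "X = mat (trace_op X) ** \<rho>"
proof -
  have aP: "adj P = P" "P ** P = P" using P by (simp_all add: orth_projD)
  define F2 where "F2 X = Fm P P X + mat (trace_op X) ** P" for X
  define G2 where "G2 Y = Gm P P Y + mat (trace_op (P ** Y))" for Y
  have trP: "trace_op P \<noteq> 0" by (rule trace_proj_nonzero[OF P Pne])
  have lin2: "linear F2"
  proof (rule linearI)
    fix x y show "F2 (x + y) = F2 x + F2 y"
      using linear_add[OF linear_Fm] by (simp add: F2_def matrix_add_rdistrib[symmetric] mat_add add_ac)
  next
    fix r x show "F2 (r *\<^sub>R x) = r *\<^sub>R F2 x"
      by (simp add: F2_def trace_mat_mult scaleR_mat Fm_mat matrix_add_ldistrib matrix_mul_assoc)
  qed
  have adj2: "hs (F2 X) Y = hs X (G2 Y)" for X Y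
  proof -
    have "hs (mat (trace_op X) ** P) Y = cnj (trace_op X) * trace_op (P ** Y)"
      by (simp add: hs_mat_left) (simp add: hs_def aP)
    moreover have "hs X (mat (trace_op (P ** Y))) = trace_op (P ** Y) * cnj (trace_op X)"
      using hs_mat_right[of X "trace_op (P ** Y)" "mat 1"] by (simp add: hs_def trace_adj)
    ultimately show ?thesis
      by (simp add: F2_def G2_def hs_add_left hs_add_right Fm_adj[OF P P cP cP] mult.commute)
  qed
  have Frho: "Fm P P \<rho> = 0" using Fm_zero_iff[OF P P cP cP] rho by blast
  have linG2: "linear G2"
  proof (rule linearI)
    fix x y show "G2 (x + y) = G2 x + G2 y"
      using linear_add[OF linear_Gm] by (simp add: G2_def matrix_add_ldistrib mat_add add_ac)
  next
    fix r x show "G2 (r *\<^sub>R x) = r *\<^sub>R G2 x"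
      by (simp add: G2_def trace_mat_mult scaleR_mat Gm_mat matrix_add_ldistrib mat_mult_assoc_comm)
  qed
  have injG2: "inj G2"
    unfolding linear_inj_iff[OF linG2]
  proof (intro allI impI)
    fix Y assume G0: "G2 Y = 0"
    have "hs \<rho> (Gm P P Y) = 0" using Fm_adj[OF P P cP cP, of \<rho> Y] Frho by simp
    moreover have "hs \<rho> (mat t) = t" for t
      using hs_mat_right[of \<rho> t "mat 1"] rho(3) by (simp add: hs_def trace_adj)
    ultimately have "hs \<rho> (G2 Y) = trace_op (P ** Y)" by (simp add: G2_def hs_add_right)
    then have t0: "trace_op (P ** Y) = 0" using G0 by simp
    then have "Gm P P Y = 0" using G0 by (simp add: G2_def)
    then have "Y = P ** Y ** P \<and> Ds Y = 0" using Gm_zero_iff[OF P P cP cP] by blast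
    then obtain c where c: "Y = mat c ** P" using block_kernel_scalar[OF irr P Pne cP] by blast
    then have "trace_op (P ** Y) = c * trace_op P" by (simp add: mat_mult_assoc_comm aP trace_mat_mult)
    then have "c = 0" using t0 trP by simp
    then show "Y = 0" using c by simp
  qed
  have "inj F2" by (rule inj_from_adj[OF lin2 adj2 injG2])
  define X' where "X' = X - mat (trace_op X) ** \<rho>"
  have "Fm P P X' = 0"
  proof -
    have "Fm P P X = 0" using Fm_zero_iff[OF P P cP cP] X by blast
    then show ?thesis unfolding X'_def
      by (simp add: linear_diff[OF linear_Fm] Fm_mat Frho)
  qed
  moreover have "trace_op X' = 0" by (simp add: X'_def trace_mat_mult rho(3))
  ultimately have "F2 X' = 0" by (simp add: F2_def)
  then have "X' = 0" using \<open>inj F2\<close> linear_inj_iff[OF lin2] by blast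
  then show ?thesis by (simp add: X'_def)
qed

end


section \<open>Entry bounds for density operators\<close>

lemma axis_cnth: "(axis i (1::complex) :: complex^'n) $ k = (if k = i then 1 else 0)"
  by (simp add: axis_def)

lemma cinner_axis_left: "cinner (axis i 1) (w::complex^'n::finite) = w $ i"
  by (simp add: cinner_def axis_cnth if_distrib if_distribR sum.delta cong: if_cong)

lemma mv_axis: "(M *v axis j 1) $ i = (M::'n::finite op) $ i $ j"
  by (simp add: matrix_vector_mult_def axis_def if_distrib if_distribR sum.delta' cong: if_cong)

lemma quad_entry: "cinner (axis i 1) (M *v axis j 1) = (M::'n::finite op) $ i $ j"
  by (simp add: cinner_axis_left mv_axis)

lemma psd_diag: assumes "psd_op M" shows "Im (M $ i $ i) = 0" "0 \<le> Re (M $ i $ i)"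
proof -
  have h: "M = adj M" using assms by (simp add: psd_op_iff)
  show "Im (M $ i $ i) = 0" using arg_cong[OF h, of "\<lambda>X. X $ i $ i"]
    by (metis adj_nth cnj.sel(2) equation_minus_iff minus_equation_iff neg_equal_zero)
  show "0 \<le> Re (M $ i $ i)" using assms quad_entry[of i M i] by (simp add: psd_op_iff) (metis)
qed

lemma psd_offdiag:
  assumes psd: "psd_op M"
  shows "cmod (M $ i $ j) \<le> (Re (M $ i $ i) + Re (M $ j $ j)) / 2"
proof (cases "M $ i $ j = 0")
  case True then show ?thesis using psd_diag[OF psd] by simp
next
  case nz: False
  have h: "M = adj M" using psd by (simp add: psd_op_iff)
  have Mji: "M $ j $ i = cnj (M $ i $ j)" using arg_cong[OF h, of "\<lambda>X. X $ j $ i"] by simp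
  define a where "a = M $ i $ j"
  define z where "z = - cnj a / of_real (cmod a)"
  have an: "cmod a > 0" using nz by (simp add: a_def)
  have za: "z * a = - of_real (cmod a)"
    using an by (simp add: z_def field_simps complex_norm_square[symmetric] power2_eq_square mult.commute)
  have zz: "cnj z * z = 1"
  proof -
    have "cnj z * z = of_real ((cmod z)^2)" by (metis complex_norm_square mult.commute)
    moreover have "cmod z = 1" using an by (simp add: z_def norm_divide)
    ultimately show ?thesis by simp
  qed
  let ?w = "axis i 1 + z *s axis j 1 :: complex^_"
  have "cinner ?w (M *v ?w) = M $ i $ i + z * M $ i $ j + cnj z * M $ j $ i + cnj z * z * M $ j $ j"
    by (simp add: matrix_vector_right_distrib matrix_vector_scale cinner_add_left cinner_add_right
        cinner_scale_left cinner_scale_right quad_entry algebra_simps)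
  also have "\<dots> = M $ i $ i + M $ j $ j - 2 * of_real (cmod a)"
  proof -
    have "cnj z * M $ j $ i = cnj (z * a)" by (simp add: Mji a_def)
    then have c2: "cnj z * M $ j $ i = - of_real (cmod a)" using za by simp
    have c1: "z * M $ i $ j = - of_real (cmod a)" using za by (simp add: a_def)
    show ?thesis unfolding c1 c2 zz by simp
  qed
  finally have eqw: "cinner ?w (M *v ?w) = M $ i $ i + M $ j $ j - 2 * of_real (cmod a)" .
  have "0 \<le> Re (cinner ?w (M *v ?w))" using psd by (simp add: psd_op_iff)
  then have "0 \<le> Re (M $ i $ i) + Re (M $ j $ j) - 2 * cmod a" unfolding eqw by simp
  then show ?thesis by (simp add: a_def)
qed

lemma density_entry_bound:
  assumes "psd_op M" "trace_op M = 1"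
  shows "cmod (M $ i $ j) \<le> 1"
proof -
  have nn: "\<And>k. 0 \<le> Re (M $ k $ k)" using psd_diag[OF assms(1)] by blast
  have s: "(\<Sum>k\<in>UNIV. Re (M $ k $ k)) = 1" using assms(2) by (simp add: trace_op_def flip: Re_sum)
  have le: "Re (M $ k $ k) \<le> 1" for k
    using member_le_sum[of k UNIV "\<lambda>k. Re (M $ k $ k)"] nn s by simp
  have "(Re (M $ i $ i) + Re (M $ j $ j)) / 2 \<le> 1" using le[of i] le[of j] by simp
  then show ?thesis using psd_offdiag[OF assms(1), of i j] by (rule_tac order_trans) auto
qed

lemma norm_vec_le_sum: "norm (x::'a::real_normed_vector^'n::finite) \<le> (\<Sum>i\<in>UNIV. norm (x $ i))"
  by (simp add: norm_vec_def L2_set_le_sum)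

lemma density_bounded: "bounded {M::'n::finite op. psd_op M \<and> trace_op M = 1}"
proof -
  have "norm M \<le> of_nat (CARD('n) * CARD('n))" if "psd_op M" "trace_op M = 1" for M :: "'n op"
  proof -
    have "norm M \<le> (\<Sum>i\<in>UNIV. norm (M $ i))" by (rule norm_vec_le_sum)
    also have "\<dots> \<le> (\<Sum>i\<in>(UNIV::'n set). \<Sum>j\<in>(UNIV::'n set). norm (M $ i $ j))"
      by (intro sum_mono norm_vec_le_sum)
    also have "\<dots> \<le> (\<Sum>i\<in>(UNIV::'n set). \<Sum>j\<in>(UNIV::'n set). 1)"
      using density_entry_bound[OF that] by (intro sum_mono) auto
    finally show ?thesis by simp
  qed
  then show ?thesis unfolding bounded_iff by blast
qed

lemma cont_adj: "continuous_on UNIV (adj :: 'n::finite op \<Rightarrow> 'n op)"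
  unfolding adj_def by (intro continuous_intros)

lemma closed_psd: "closed {M::'n::finite op. psd_op M}"
proof -
  have "{M::'n op. psd_op M} = {M. M = adj M} \<inter> {M. \<forall>v. 0 \<le> Re (cinner v (M *v v))}"
    by (auto simp: psd_op_iff)
  moreover have "closed {M::'n op. M = adj M}"
    by (rule closed_Collect_eq) (auto intro: continuous_intros cont_adj)
  moreover have "closed {M::'n op. \<forall>v. 0 \<le> Re (cinner v (M *v v))}"
    unfolding cinner_def matrix_vector_mult_def
    by (intro closed_Collect_all closed_Collect_le) (auto intro!: continuous_intros)
  ultimately show ?thesis by auto
qed

lemma closed_trace1: "closed {M::'n::finite op. trace_op M = 1}"
  unfolding trace_op_def by (rule closed_Collect_eq) (auto intro!: continuous_intros)

lemma closed_block: "closed {M::'n::finite op. M = P ** M ** P}"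
  unfolding matrix_matrix_mult_def by (rule closed_Collect_eq) (auto intro!: continuous_intros)

lemma psd_scaleR: "psd_op M \<Longrightarrow> 0 \<le> r \<Longrightarrow> psd_op (r *\<^sub>R M)"
  unfolding psd_op_iff
  by (auto simp: scaleR_mat adj_mult mat_mult_comm matrix_vector_mul_assoc[symmetric] mat_vector_mult
      cinner_scale_right matrix_vector_scale)

lemma convex_density_block: "convex {M::'n::finite op. psd_op M \<and> trace_op M = 1 \<and> M = P ** M ** P}"
proof (rule convexI)
  fix x y :: "'n op" and u v :: real
  assume x: "x \<in> {M. psd_op M \<and> trace_op M = 1 \<and> M = P ** M ** P}"
    and y: "y \<in> {M. psd_op M \<and> trace_op M = 1 \<and> M = P ** M ** P}"
    and uv: "0 \<le> u" "0 \<le> v" "u + v = 1"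
  have "psd_op (u *\<^sub>R x + v *\<^sub>R y)" using x y uv by (intro psd_add psd_scaleR) auto
  moreover have "trace_op (u *\<^sub>R x + v *\<^sub>R y) = 1"
    using x y uv by (simp add: trace_scaleR) (metis of_real_add of_real_1)
  moreover have "u *\<^sub>R x + v *\<^sub>R y = P ** (u *\<^sub>R x + v *\<^sub>R y) ** P"
    using x y by (simp add: linear_add[OF compress_linear] linear_cmul[OF compress_linear] del: matrix_mul_assoc)
  ultimately show "u *\<^sub>R x + v *\<^sub>R y \<in> {M. psd_op M \<and> trace_op M = 1 \<and> M = P ** M ** P}" by simp
qed


lemma mv_scaleR_left: "(r *\<^sub>R (M::'n::finite op)) *v v = of_real r *s (M *v v)"
  by (simp add: scaleR_mat matrix_vector_mul_assoc[symmetric] mat_vector_mult)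

lemma adj_scaleR: "adj (r *\<^sub>R M) = r *\<^sub>R adj (M::'n::finite op)"
  by (simp add: scaleR_mat adj_mult mat_mult_comm)

lemma quad_min_scale:
  assumes "\<And>v. norm v = 1 \<Longrightarrow> m \<le> Re (cinner v (Y *v v))"
  shows "m * norm u ^ 2 \<le> Re (cinner u (Y *v (u::complex^'n::finite)))"
proof (cases "u = 0")
  case True then show ?thesis by simp
next
  case False
  define v where "v = (1 / norm u) *\<^sub>R u"
  have "norm v = 1" using False by (simp add: v_def)
  then have "m \<le> Re (cinner v (Y *v v))" by (rule assms)
  also have "Re (cinner v (Y *v v)) = (1 / norm u)^2 * Re (cinner u (Y *v u))"
    unfolding v_def cinner_scaleR_quad by simp
  finally show ?thesis using False by (simp add: field_simps)
qed

context lind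
begin

lemma S_psd: "psd_op S"
  unfolding S_def by (intro psd_sum psd_adj_mult)

lemma bound_exists: "\<exists>lam::real. lam > 0 \<and> (\<forall>v::complex^'n. norm v = 1 \<longrightarrow> (\<Sum>a\<in>A. (norm (adj (h a) *v v))^2) < lam)"
proof -
  let ?g = "\<lambda>v::complex^'n. (\<Sum>a\<in>A. (norm (adj (h a) *v v))^2)"
  have c: "continuous_on (sphere 0 1) ?g"
    unfolding matrix_vector_mult_def by (intro continuous_intros)
  obtain v0 where "v0 \<in> sphere 0 1" "\<And>v. v \<in> sphere 0 1 \<Longrightarrow> ?g v \<le> ?g v0"
    using continuous_attains_sup[OF compact_sphere _ c] by auto
  moreover have "0 \<le> ?g v0" by (intro sum_nonneg) auto
  ultimately show ?thesis
    by (intro exI[of _ "?g v0 + 1"]) (auto simp: add_pos_nonneg intro!: le_less_trans[OF _ less_add_one])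
qed

lemma pos_res:
  assumes lam: "\<And>v::complex^'n. norm v = 1 \<Longrightarrow> (\<Sum>a\<in>A. (norm (adj (h a) *v v))^2) < lam"
    and Yh: "Y = adj Y" and X: "psd_op X" and eq: "lam *\<^sub>R Y - D Y = X"
  shows "psd_op Y"
proof -
  let ?F = "\<lambda>v. Re (cinner v (Y *v v))"
  have c: "continuous_on (sphere 0 1) ?F"
    unfolding cinner_def matrix_vector_mult_def by (intro continuous_intros)
  obtain v0 where v0: "v0 \<in> sphere (0::complex^'n) 1" and v0min: "\<And>v. v \<in> sphere 0 1 \<Longrightarrow> ?F v0 \<le> ?F v"
    using continuous_attains_inf[OF compact_sphere _ c] by auto
  define \<mu> where "\<mu> = ?F v0"
  have Fge: "\<mu> * norm u ^ 2 \<le> ?F u" for u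
    by (rule quad_min_scale) (use v0min in \<open>auto simp: \<mu>_def\<close>)
  show ?thesis
  proof (cases "\<mu> \<ge> 0")
    case True
    show ?thesis unfolding psd_op_iff
    proof (intro conjI allI)
      show "Y = adj Y" by (rule Yh)
      fix v :: "complex^'n"
      have "0 \<le> \<mu> * norm v ^ 2" using True by simp
      then show "0 \<le> Re (cinner v (Y *v v))" using Fge[of v] by linarith
    qed
  next
    case False
    then have mneg: "\<mu> < 0" by simp
    have nv0: "norm v0 = 1" using v0 by simp
    define m where "m = complex_of_real \<mu>"
    define Y' where "Y' = Y - mat m"
    have psdY': "psd_op Y'"
      unfolding psd_op_iff
    proof (intro conjI allI)
      show "Y' = adj Y'" using Yh by (simp add: Y'_def m_def)
      fix u
      have "cinner u (Y' *v u) = cinner u (Y *v u) - m * cinner u u"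
        by (simp add: Y'_def matrix_vector_mult_diff_rdistrib mat_vector_mult cinner_diff_right cinner_scale_right)
      then show "0 \<le> Re (cinner u (Y' *v u))" using Fge[of u] by (simp add: m_def cinner_self)
    qed
    have "cinner v0 (Y' *v v0) = cinner v0 (Y *v v0) - m * cinner v0 v0"
      by (simp add: Y'_def matrix_vector_mult_diff_rdistrib mat_vector_mult cinner_diff_right cinner_scale_right)
    then have "Re (cinner v0 (Y' *v v0)) = 0" using nv0 by (simp add: m_def cinner_self \<mu>_def)
    then have "Y' *v v0 = 0" using psd_kernel[OF psdY'] by blast
    then have Yv0: "Y *v v0 = m *s v0"
      by (simp add: Y'_def matrix_vector_mult_diff_rdistrib mat_vector_mult)
    have cY: "cinner w (Y *v u) = cinner (Y *v w) u" for w u by (metis Yh cinner_adj)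
    have t1: "cinner v0 (K *v (Y *v v0)) + cinner v0 (Y *v (adj K *v v0)) = - m * cinner v0 (S *v v0)"
    proof -
      have "cinner v0 (K *v (Y *v v0)) + cinner v0 (Y *v (adj K *v v0))
          = m * (cinner v0 (K *v v0) + cinner v0 (adj K *v v0))"
        by (simp add: Yv0 cY matrix_vector_scale cinner_scale_right cinner_scale_left m_def algebra_simps)
      also have "cinner v0 (K *v v0) + cinner v0 (adj K *v v0) = cinner v0 ((K + adj K) *v v0)"
        by (simp add: matrix_vector_mult_add_rdistrib cinner_add_right)
      also have "\<dots> = - cinner v0 (S *v v0)" by (simp add: K_adjK mv_uminus cinner_uminus_right)
      finally show ?thesis by simp
    qed
    have t2: "cinner v0 (J Y *v v0) = (\<Sum>a\<in>A. cinner (adj (h a) *v v0) (Y *v (adj (h a) *v v0)))"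
      by (simp add: J_def matrix_vector_sum_left cinner_sum_right matrix_vector_mul_assoc[symmetric] cinner_adj)
    have "cinner v0 (D Y *v v0) = - m * cinner v0 (S *v v0) + (\<Sum>a\<in>A. cinner (adj (h a) *v v0) (Y *v (adj (h a) *v v0)))"
      unfolding D_form t1[symmetric] t2[symmetric]
      by (simp add: matrix_vector_mult_add_rdistrib cinner_add_right matrix_vector_mul_assoc[symmetric])
    then have ReD: "Re (cinner v0 (D Y *v v0)) = - \<mu> * Re (cinner v0 (S *v v0))
        + (\<Sum>a\<in>A. ?F (adj (h a) *v v0))"
      by (simp add: m_def Re_sum)
    have "0 \<le> Re (cinner v0 (S *v v0))" using S_psd by (simp add: psd_op_iff)
    then have "0 \<le> - \<mu> * Re (cinner v0 (S *v v0))" using mneg by (simp add: mult_nonpos_nonneg)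
    moreover have "(\<Sum>a\<in>A. \<mu> * (norm (adj (h a) *v v0))^2) \<le> (\<Sum>a\<in>A. ?F (adj (h a) *v v0))"
      by (intro sum_mono Fge)
    ultimately have ge: "\<mu> * (\<Sum>a\<in>A. (norm (adj (h a) *v v0))^2) \<le> Re (cinner v0 (D Y *v v0))"
      unfolding ReD by (simp add: sum_distrib_left)
    have "cinner v0 (X *v v0) = of_real lam * cinner v0 (Y *v v0) - cinner v0 (D Y *v v0)"
      unfolding eq[symmetric]
      by (simp add: matrix_vector_mult_diff_rdistrib mv_scaleR_left cinner_diff_right cinner_scale_right)
    then have "Re (cinner v0 (X *v v0)) = lam * \<mu> - Re (cinner v0 (D Y *v v0))" by (simp add: \<mu>_def)
    also have "\<dots> \<le> lam * \<mu> - \<mu> * (\<Sum>a\<in>A. (norm (adj (h a) *v v0))^2)" using ge by simp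
    also have "\<dots> = \<mu> * (lam - (\<Sum>a\<in>A. (norm (adj (h a) *v v0))^2))" by (simp add: algebra_simps)
    also have "\<dots> < 0" using mneg lam[OF nv0] by (simp add: mult_neg_pos)
    finally have "Re (cinner v0 (X *v v0)) < 0" .
    moreover have "0 \<le> Re (cinner v0 (X *v v0))" using X by (simp add: psd_op_iff)
    ultimately show ?thesis by simp
  qed
qed

end


lemma trace_hs_self: "trace_op (adj W ** W) = of_real (norm W ^ 2)"
  by (metis hs_def hs_self)

context lind
begin

definition Lm where "Lm lam Y = lam *\<^sub>R Y - D Y"

lemma Lm_adj: "adj (Lm lam Y) = Lm lam (adj Y)"
  by (simp add: Lm_def adj_scaleR adj_D)

lemma scaleR_mat_comm: "r *\<^sub>R (mat c ** Y) = mat c ** (r *\<^sub>R (Y::'n op))"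
  unfolding vec_eq_iff by (simp add: mat_nth_mult)

lemma Lm_mat: "Lm lam (mat c ** Y) = mat c ** Lm lam Y"
  by (simp add: Lm_def D_mat matrix_diff_ldistrib scaleR_mat_comm)

lemma linear_Lm: "linear (Lm lam)"
  by (rule linearI)
     (simp_all add: Lm_def D_add linear_cmul[OF linear_D] scaleR_add_right scaleR_diff_right algebra_simps)

lemma Lm_compress: assumes cP: "comm_all H h A P" shows "Lm lam (P ** Y ** P) = P ** Lm lam Y ** P"
  by (simp add: Lm_def D_left[OF cP] D_right[OF cP] matrix_diff_ldistrib matrix_diff_rdistrib
      linear_cmul[OF compress_linear])

lemma Lm_herm_zero:
  assumes lam: "\<And>v::complex^'n. norm v = 1 \<Longrightarrow> (\<Sum>a\<in>A. (norm (adj (h a) *v v))^2) < lam"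
    and Yh: "Y = adj Y" and L0: "Lm lam Y = 0"
  shows "Y = 0"
proof -
  have p1: "psd_op Y" using pos_res[OF lam Yh psd_zero] L0 by (simp add: Lm_def)
  have "Lm lam (- Y) = 0" using L0 linear_neg[OF linear_Lm] by simp
  then have p2: "psd_op (- Y)" using pos_res[OF lam _ psd_zero, of "- Y"] Yh by (simp add: Lm_def)
  have "Y *v v = 0" for v
  proof -
    have "0 \<le> Re (cinner v (Y *v v))" using p1 by (simp add: psd_op_iff)
    moreover have "0 \<le> Re (cinner v ((- Y) *v v))" using p2 by (simp add: psd_op_iff)
    ultimately have "Re (cinner v (Y *v v)) = 0" by (simp add: mv_uminus cinner_uminus_right)
    then show ?thesis using psd_kernel[OF p1] by blast
  qed
  then show ?thesis using matrix_eq[of Y 0] by simp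
qed

lemma Lm_inj:
  assumes lam: "\<And>v::complex^'n. norm v = 1 \<Longrightarrow> (\<Sum>a\<in>A. (norm (adj (h a) *v v))^2) < lam"
  shows "inj (Lm lam)"
  unfolding linear_inj_iff[OF linear_Lm]
proof (intro allI impI)
  fix Y assume L0: "Lm lam Y = 0"
  define Y1 where "Y1 = mat (1/2) ** (Y + adj Y)"
  define Y2 where "Y2 = mat (- \<i>/2) ** (Y - adj Y)"
  have LaY: "Lm lam (adj Y) = 0" using L0 by (metis Lm_adj adj_zero)
  have h1: "Y1 = adj Y1"
    unfolding Y1_def by (simp add: adj_mult mat_mult_comm add.commute)
  have h2: "Y2 = adj Y2"
  proof -
    have "adj Y2 = (adj Y - Y) ** mat (\<i>/2)" unfolding Y2_def by (simp add: adj_mult)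
    also have "\<dots> = mat (- \<i>/2) ** (Y - adj Y)"
      by (simp add: mat_mult_comm[symmetric] matrix_diff_ldistrib mat_neg_mult)
    finally show ?thesis unfolding Y2_def by simp
  qed
  have l1: "Lm lam Y1 = 0" unfolding Y1_def
    by (simp add: Lm_mat linear_add[OF linear_Lm] L0 LaY)
  have l2: "Lm lam Y2 = 0" unfolding Y2_def
    by (simp add: Lm_mat linear_diff[OF linear_Lm] L0 LaY)
  have "Y1 = 0" by (rule Lm_herm_zero[OF lam h1 l1])
  moreover have "Y2 = 0" by (rule Lm_herm_zero[OF lam h2 l2])
  moreover have "Y = Y1 + mat \<i> ** Y2"
  proof -
    have "Y1 + mat \<i> ** Y2 = mat (1/2) ** (Y + adj Y) + mat (1/2) ** (Y - adj Y)"
      unfolding Y1_def Y2_def by (simp add: matrix_mul_assoc)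
    also have "\<dots> = mat (1/2) ** (Y + Y)"
      by (simp add: matrix_add_ldistrib[symmetric])
    also have "\<dots> = Y" by (simp only: matrix_add_ldistrib matrix_add_rdistrib[symmetric] mat_add) simp
    finally show ?thesis by simp
  qed
  ultimately show "Y = 0" by simp
qed

lemma density_exists:
  assumes P: "orth_proj P" and Pne: "P \<noteq> 0" and cP: "comm_all H h A P"
  shows "\<exists>\<rho>. density_op \<rho> \<and> \<rho> = P ** \<rho> ** P \<and> D \<rho> = 0"
proof -
  have aP: "adj P = P" "P ** P = P" using P by (simp_all add: orth_projD)
  obtain lam where lpos: "lam > 0"
    and lam: "\<And>v::complex^'n. norm v = 1 \<Longrightarrow> (\<Sum>a\<in>A. (norm (adj (h a) *v v))^2) < lam"
    using bound_exists by blast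
  let ?L = "Lm lam"
  have injL: "inj ?L" by (rule Lm_inj[OF lam])
  then have "surj ?L" using linear_Lm by (simp add: linear_injective_imp_surjective)
  then obtain g where lg: "linear g" and Lg: "?L \<circ> g = id"
    using linear_surjective_right_inverse[OF linear_Lm] by blast
  have Lg': "?L (g X) = X" for X using Lg by (simp add: fun_eq_iff)
  define \<Phi> where "\<Phi> X = lam *\<^sub>R g X" for X
  define T where "T = {M::'n op. psd_op M \<and> trace_op M = 1 \<and> M = P ** M ** P}"
  have trP: "trace_op P = of_real (norm P ^ 2)"
    using trace_hs_self[of P] aP by simp
  have nP: "norm P > 0" using Pne by simp
  define \<rho>0 where "\<rho>0 = (1 / norm P ^ 2) *\<^sub>R P"
  have "\<rho>0 \<in> T"
  proof -
    have "psd_op P" using psd_adj_mult[of P] aP by simp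
    then have "psd_op \<rho>0" unfolding \<rho>0_def by (rule psd_scaleR) simp
    moreover have "trace_op \<rho>0 = 1" using nP by (simp add: \<rho>0_def trace_scaleR trP)
    moreover have "\<rho>0 = P ** \<rho>0 ** P"
      by (simp add: \<rho>0_def linear_cmul[OF compress_linear] aP del: matrix_mul_assoc)
    ultimately show ?thesis by (simp add: T_def)
  qed
  then have neT: "T \<noteq> {}" by blast
  have cT: "compact T"
  proof -
    have "closed T"
      unfolding T_def Collect_conj_eq by (intro closed_Int closed_psd closed_trace1 closed_block)
    moreover have "bounded T"
      by (rule bounded_subset[OF density_bounded]) (auto simp: T_def)
    ultimately show ?thesis by (simp add: compact_eq_bounded_closed)
  qed
  have cvT: "convex T" unfolding T_def by (rule convex_density_block)
  have contPhi: "continuous_on T \<Phi>"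
  proof -
    have "bounded_linear g" using lg linear_conv_bounded_linear by blast
    then show ?thesis unfolding \<Phi>_def by (intro continuous_intros linear_continuous_on)
  qed
  have PhiT: "\<Phi> \<in> T \<rightarrow> T"
  proof
    fix X assume X: "X \<in> T"
    define Y where "Y = g X"
    have LY: "?L Y = X" by (simp add: Y_def Lg')
    have XP: "X = P ** X ** P" using X by (simp add: T_def)
    have YP: "P ** Y ** P = Y"
    proof -
      have "?L (P ** Y ** P) = ?L Y" using XP by (simp add: Lm_compress[OF cP] LY)
      then show ?thesis using injL by (simp add: inj_eq)
    qed
    have Yh: "Y = adj Y"
    proof -
      have "X = adj X" using X by (simp add: T_def psd_op_iff)
      then have "?L (adj Y) = ?L Y" by (simp add: Lm_adj[symmetric] LY)
      then show ?thesis using injL by (simp add: inj_eq)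
    qed
    have psdY: "psd_op Y"
      using pos_res[OF lam Yh, of X] X LY by (simp add: T_def Lm_def)
    have trY: "of_real lam * trace_op Y = 1"
    proof -
      have "trace_op (?L Y) = of_real lam * trace_op Y" by (simp add: Lm_def trace_scaleR trace_D)
      then show ?thesis using LY X by (simp add: T_def)
    qed
    have "psd_op (\<Phi> X)" unfolding \<Phi>_def Y_def[symmetric] using psdY lpos by (simp add: psd_scaleR)
    moreover have "trace_op (\<Phi> X) = 1" unfolding \<Phi>_def Y_def[symmetric] using trY by (simp add: trace_scaleR)
    moreover have "\<Phi> X = P ** \<Phi> X ** P"
      unfolding \<Phi>_def Y_def[symmetric] by (simp add: linear_cmul[OF compress_linear] YP del: matrix_mul_assoc)
    ultimately show "\<Phi> X \<in> T" by (simp add: T_def)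
  qed
  obtain \<rho> where rT: "\<rho> \<in> T" and fx: "\<Phi> \<rho> = \<rho>"
    using brouwer[OF cT cvT neT contPhi PhiT] by blast
  have "?L \<rho> = lam *\<^sub>R \<rho>"
  proof -
    have "?L \<rho> = ?L (lam *\<^sub>R g \<rho>)" using fx by (simp add: \<Phi>_def)
    also have "\<dots> = lam *\<^sub>R ?L (g \<rho>)" by (rule linear_cmul[OF linear_Lm])
    finally show ?thesis by (simp add: Lg')
  qed
  then have "D \<rho> = 0" by (simp add: Lm_def)
  then show ?thesis using rT by (auto simp: T_def density_op_def)
qed

end


context lind
begin


lemma comm_all_unitary:
  assumes U: "unitary_op U" and UH: "U ** H = H ** U" and Uh: "\<forall>a\<in>A. U ** h a = h a ** U"
  shows "comm_all H h A U"
proof -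
  have u1: "adj U ** U = mat 1" and u2: "U ** adj U = mat 1" using U by (simp_all add: unitary_op_def)
  have "U ** adj (h a) = adj (h a) ** U" if a: "a \<in> A" for a
  proof -
    have "adj U ** (U ** h a) ** adj U = adj U ** (h a ** U) ** adj U" using Uh a by simp
    then have "h a ** adj U = adj U ** h a"
      by (simp add: matrix_mul_assoc u1) (simp add: matrix_mul_assoc[symmetric] u2)
    then show ?thesis using arg_cong[of _ _ adj] by (metis adj_adj adj_mult)
  qed
  then show ?thesis using UH Uh by (simp add: comm_all_def)
qed

end

theorem mainTheorem11:
  fixes H Pi Pj :: "'n::finite op" and h :: "'a \<Rightarrow> 'n op" and A :: "'a set"
  assumes finA: "finite A"
    and herm: "H = adj H"
    and proj_i: "orth_proj Pi" and proj_j: "orth_proj Pj"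
    and sum1: "Pi + Pj = mat 1" and orth: "Pi ** Pj = 0"
    and commH: "H ** Pi = Pi ** H" "H ** Pj = Pj ** H"
    and commh: "\<forall>\<alpha>\<in>A. h \<alpha> ** Pi = Pi ** h \<alpha> \<and> h \<alpha> ** Pj = Pj ** h \<alpha>"
    and irr_i: "no_proper_collecting H h A Pi"
    and irr_j: "no_proper_collecting H h A Pj"
  shows "((\<exists>\<sigma>. \<sigma> \<noteq> 0 \<and> \<sigma> = Pi ** \<sigma> ** Pj \<and> lindblad H h A \<sigma> = 0)
          \<longleftrightarrow> (\<exists>U. unitary_op U \<and> U ** H = H ** U \<and> (\<forall>\<alpha>\<in>A. U ** h \<alpha> = h \<alpha> ** U)
                  \<and> U ** Pj = Pi ** U \<and> U ** U = mat 1))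
       \<and> ((\<exists>\<sigma>. \<sigma> \<noteq> 0 \<and> \<sigma> = Pi ** \<sigma> ** Pj \<and> lindblad H h A \<sigma> = 0) \<longrightarrow>
            (\<exists>!\<rho>. density_op \<rho> \<and> \<rho> = Pj ** \<rho> ** Pj \<and> lindblad H h A \<rho> = 0)
          \<and> (\<forall>U \<rho>j. unitary_op U \<and> U ** H = H ** U \<and> (\<forall>\<alpha>\<in>A. U ** h \<alpha> = h \<alpha> ** U)
                  \<and> U ** Pj = Pi ** U \<and> U ** U = mat 1
                  \<and> density_op \<rho>j \<and> \<rho>j = Pj ** \<rho>j ** Pj \<and> lindblad H h A \<rho>j = 0 \<longrightarrow>
                (\<forall>\<sigma>. \<sigma> = Pi ** \<sigma> ** Pj \<and> lindblad H h A \<sigma> = 0 \<longrightarrow>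
                     (\<exists>c. \<sigma> = cscale c (U ** \<rho>j)))))"
proof -
  interpret L: lind H h A using finA herm by unfold_locales
  have aPi: "adj Pi = Pi" "Pi ** Pi = Pi" using proj_i by (simp_all add: orth_projD)
  have aPj: "adj Pj = Pj" "Pj ** Pj = Pj" using proj_j by (simp_all add: orth_projD)
  have cPi: "comm_all H h A Pi" using aPi commH commh by (intro comm_all_herm) auto
  have cPj: "comm_all H h A Pj" using aPj commH commh by (intro comm_all_herm) auto
  have orth': "Pj ** Pi = 0" using arg_cong[OF orth, of adj] by (simp add: adj_mult aPi aPj)
  let ?EX = "\<exists>\<sigma>. \<sigma> \<noteq> 0 \<and> \<sigma> = Pi ** \<sigma> ** Pj \<and> lindblad H h A \<sigma> = 0"
  let ?UX = "\<exists>U. unitary_op U \<and> U ** H = H ** U \<and> (\<forall>\<alpha>\<in>A. U ** h \<alpha> = h \<alpha> ** U)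
                  \<and> U ** Pj = Pi ** U \<and> U ** U = mat 1"
  have nz_of_EX: "Pi \<noteq> 0 \<and> Pj \<noteq> 0" if ?EX
    using that by force
  have fwd: ?UX if ex: ?EX
  proof -
    obtain \<sigma> where s: "\<sigma> \<noteq> 0" "\<sigma> = Pi ** \<sigma> ** Pj" "L.D \<sigma> = 0" using ex by blast
    have Pine: "Pi \<noteq> 0" and Pjne: "Pj \<noteq> 0" using nz_of_EX ex by auto
    obtain W where W: "W \<noteq> 0" "W = Pi ** W ** Pj" "L.Ds W = 0"
      using L.dual_kernel_exists[OF proj_i proj_j cPi cPj s] by blast
    have cW: "comm_all H h A W"
      by (rule L.comm_all_of_kernel[OF irr_i proj_i Pine cPi irr_j proj_j Pjne cPj W(2,3)])
    have caW: "comm_all H h A (adj W)" by (rule comm_all_adj[OF herm cW])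
    have PiW: "Pi ** W = W" by (metis W(2) aPi(2) matrix_mul_assoc)
    have WPj: "W ** Pj = W" by (metis W(2) aPj(2) matrix_mul_assoc)
    have aWPi: "adj W ** Pi = adj W" using arg_cong[OF PiW, of adj] by (simp add: adj_mult aPi)
    have PjaW: "Pj ** adj W = adj W" using arg_cong[OF WPj, of adj] by (simp add: adj_mult aPj)
    define Z where "Z = adj W ** W"
    define Z' where "Z' = W ** adj W"
    have cZ: "comm_all H h A Z" unfolding Z_def by (rule comm_all_mult[OF caW cW])
    have cZ': "comm_all H h A Z'" unfolding Z'_def by (rule comm_all_mult[OF cW caW])
    have DZ: "L.Ds Z = 0" by (rule L.Ds_comm_zero[OF cZ])
    have DZ': "L.Ds Z' = 0" by (rule L.Ds_comm_zero[OF cZ'])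
    have Zb: "Z = Pj ** Z ** Pj" unfolding Z_def by (metis PjaW WPj matrix_mul_assoc)
    have Zb': "Z' = Pi ** Z' ** Pi" unfolding Z'_def by (metis PiW aWPi matrix_mul_assoc)
    obtain c where c: "Z = mat (of_real c) ** Pj"
      using L.herm_block_scalar[OF irr_j proj_j Pjne cPj _ Zb] DZ psd_zero by (auto simp: Z_def adj_mult)
    obtain c' where c': "Z' = mat (of_real c') ** Pi"
      using L.herm_block_scalar[OF irr_i proj_i Pine cPi _ Zb'] DZ' psd_zero by (auto simp: Z'_def adj_mult)
    have trPj: "trace_op Pj = of_real (norm Pj ^ 2)" using trace_hs_self[of Pj] aPj by simp
    have "of_real (norm W ^ 2) = trace_op Z" by (simp add: Z_def trace_hs_self)
    also have "\<dots> = of_real c * of_real (norm Pj ^ 2)" by (simp add: c trace_mat_mult trPj)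
    finally have eqc: "norm W ^ 2 = c * norm Pj ^ 2" by (metis of_real_eq_iff of_real_mult)
    have pW: "norm W > 0" and pP: "norm Pj > 0" using W(1) Pjne by auto
    then have "c = norm W ^ 2 / norm Pj ^ 2" using eqc by (simp add: field_simps)
    then have cpos: "c > 0" using pW pP by simp
    have "W ** Z = Z' ** W" by (simp add: Z_def Z'_def matrix_mul_assoc)
    then have eqm: "mat (of_real c) ** W = mat (of_real c') ** W"
      by (simp add: c c' mat_mult_assoc_comm WPj matrix_mul_assoc[symmetric] PiW)
    have eqv: "c = c' \<or> W *v v = 0" for v
    proof -
      have "(mat (of_real c) ** W) *v v = (mat (of_real c') ** W) *v v" using eqm by simp
      then show ?thesis by (simp add: matrix_vector_mul_assoc[symmetric] mat_vector_mult)
    qed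
    obtain v where v: "W *v v \<noteq> 0" using W(1) matrix_eq[of W 0] by auto
    then have cc: "c' = c" using eqv[of v] by simp
    define V where "V = mat (of_real (1 / sqrt c)) ** W"
    have aV: "adj V = mat (of_real (1 / sqrt c)) ** adj W"
      by (simp add: V_def adj_mult mat_mult_comm)
    have sc2: "complex_of_real (sqrt c) * complex_of_real (sqrt c) = complex_of_real c"
      by (simp only: of_real_mult[symmetric] real_sqrt_mult_self abs_of_pos[OF cpos])
    have cnz: "complex_of_real c \<noteq> 0" using cpos by simp
    have VV1: "adj V ** V = Pj"
    proof -
      have "adj V ** V = (mat (of_real (1 / sqrt c)) ** adj W) ** (mat (of_real (1 / sqrt c)) ** W)" unfolding aV unfolding V_def ..
      also have "\<dots> = mat (of_real (1 / sqrt c)) ** (adj W ** (mat (of_real (1 / sqrt c)) ** W))"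
        by (simp only: matrix_mul_assoc)
      also have "\<dots> = mat (of_real (1 / sqrt c)) ** (mat (of_real (1 / sqrt c)) ** Z)"
        unfolding Z_def by (subst mat_mult_assoc_comm) (rule refl)
      also have "\<dots> = Pj" by (simp add: c matrix_mul_assoc sc2 cnz less_imp_neq[OF cpos, symmetric])
      finally show ?thesis .
    qed
    have VV2: "V ** adj V = Pi"
    proof -
      have "V ** adj V = (mat (of_real (1 / sqrt c)) ** W) ** (mat (of_real (1 / sqrt c)) ** adj W)" unfolding aV unfolding V_def ..
      also have "\<dots> = mat (of_real (1 / sqrt c)) ** (W ** (mat (of_real (1 / sqrt c)) ** adj W))"
        by (simp only: matrix_mul_assoc)
      also have "\<dots> = mat (of_real (1 / sqrt c)) ** (mat (of_real (1 / sqrt c)) ** Z')"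
        unfolding Z'_def by (subst mat_mult_assoc_comm) (rule refl)
      also have "\<dots> = Pi" by (simp add: c' cc matrix_mul_assoc sc2 cnz less_imp_neq[OF cpos, symmetric])
      finally show ?thesis .
    qed
    have WW: "W ** W = 0" by (metis WPj PiW orth' matrix_mul_assoc times0_left times0_right)
    have VV0: "V ** V = 0"
    proof -
      have "V ** V = mat (of_real (1 / sqrt c)) ** (W ** (mat (of_real (1 / sqrt c)) ** W))"
        unfolding V_def by (simp only: matrix_mul_assoc)
      also have "\<dots> = mat (of_real (1 / sqrt c)) ** (mat (of_real (1 / sqrt c)) ** (W ** W))"
        by (subst mat_mult_assoc_comm) (rule refl)
      finally show ?thesis by (simp add: WW)
    qed
    have aVV0: "adj V ** adj V = 0" using arg_cong[OF VV0, of adj] by (simp add: adj_mult)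
    define U where "U = V + adj V"
    have aU: "adj U = U" by (simp add: U_def add.commute)
    have UU: "U ** U = mat 1"
      using sum1 by (simp add: U_def matrix_add_ldistrib matrix_add_rdistrib VV0 aVV0 VV1 VV2 add.commute)
    have cV: "comm_all H h A V" unfolding V_def by (rule comm_all_mult[OF comm_all_mat cW])
    have caV: "comm_all H h A (adj V)" by (rule comm_all_adj[OF herm cV])
    have UH: "U ** H = H ** U" using cV caV
      by (simp add: U_def comm_all_def matrix_add_ldistrib matrix_add_rdistrib)
    have Uh: "\<forall>a\<in>A. U ** h a = h a ** U" using cV caV
      by (simp add: U_def comm_all_def matrix_add_ldistrib matrix_add_rdistrib)
    have VPj: "V ** Pj = V" by (simp add: V_def matrix_mul_assoc[symmetric] WPj)
    have PiV: "Pi ** V = V" by (simp add: V_def mat_mult_assoc_comm PiW)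
    have aWPj: "adj W ** Pj = 0" by (metis aWPi matrix_mul_assoc orth times0_right)
    have aVPj: "adj V ** Pj = 0" unfolding aV by (simp add: matrix_mul_assoc[symmetric] aWPj)
    have PiaW: "Pi ** adj W = 0" by (metis PjaW matrix_mul_assoc orth times0_left)
    have PiaV: "Pi ** adj V = 0" unfolding aV by (simp add: mat_mult_assoc_comm PiaW)
    have "U ** Pj = Pi ** U"
      by (simp add: U_def matrix_add_ldistrib matrix_add_rdistrib VPj PiV aVPj PiaV)
    moreover have "unitary_op U" by (simp add: unitary_op_def aU UU)
    ultimately show ?thesis using UH Uh UU by blast
  qed
  have bwd: ?EX if ux: ?UX
  proof -
    obtain U where U: "unitary_op U" "U ** H = H ** U" "\<forall>a\<in>A. U ** h a = h a ** U"
      "U ** Pj = Pi ** U" "U ** U = mat 1" using ux by blast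
    have cU: "comm_all H h A U" by (rule L.comm_all_unitary[OF U(1-3)])
    have u1: "adj U ** U = mat 1" using U(1) by (simp add: unitary_op_def)
    have Pjne: "Pj \<noteq> 0"
    proof
      assume "Pj = 0"
      then have "Pi ** U = 0" using U(4) by simp
      then have "Pi = 0" by (metis U(5) matrix_mul_assoc matrix_mul_rid times0_left)
      then show False using sum1 \<open>Pj = 0\<close> mat_1_neq_0[where 'n='n] by simp
    qed
    have "L.Ds Pj = 0" by (rule L.Ds_comm_zero[OF cPj])
    moreover have "Pj = Pj ** Pj ** Pj" using aPj by simp
    ultimately obtain X where X: "X \<noteq> 0" "X = Pj ** X ** Pj" "L.D X = 0"
      using L.kernel_exists_from_dual[OF proj_j proj_j cPj cPj Pjne] by blast
    define \<sigma> where "\<sigma> = U ** X"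
    have "\<sigma> \<noteq> 0"
    proof
      assume "\<sigma> = 0"
      then have "adj U ** (U ** X) = 0" by (simp add: \<sigma>_def)
      then show False using X(1) u1 by (simp add: matrix_mul_assoc)
    qed
    moreover have "Pi ** \<sigma> ** Pj = \<sigma>"
      unfolding \<sigma>_def by (metis U(4) X(2) matrix_mul_assoc)
    moreover have "L.D \<sigma> = 0" by (simp add: \<sigma>_def L.D_left[OF cU] X(3))
    ultimately show ?thesis by metis
  qed
  have part2: "(\<exists>!\<rho>. density_op \<rho> \<and> \<rho> = Pj ** \<rho> ** Pj \<and> lindblad H h A \<rho> = 0)
          \<and> (\<forall>U \<rho>j. unitary_op U \<and> U ** H = H ** U \<and> (\<forall>\<alpha>\<in>A. U ** h \<alpha> = h \<alpha> ** U)
                  \<and> U ** Pj = Pi ** U \<and> U ** U = mat 1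
                  \<and> density_op \<rho>j \<and> \<rho>j = Pj ** \<rho>j ** Pj \<and> lindblad H h A \<rho>j = 0 \<longrightarrow>
                (\<forall>\<sigma>. \<sigma> = Pi ** \<sigma> ** Pj \<and> lindblad H h A \<sigma> = 0 \<longrightarrow>
                     (\<exists>c. \<sigma> = cscale c (U ** \<rho>j))))" if ex: ?EX
  proof
    have Pjne: "Pj \<noteq> 0" using nz_of_EX ex by auto
    obtain \<rho> where rho: "density_op \<rho>" "\<rho> = Pj ** \<rho> ** Pj" "L.D \<rho> = 0"
      using L.density_exists[OF proj_j Pjne cPj] by blast
    have tr1: "trace_op \<rho> = 1" using rho(1) by (simp add: density_op_def)
    show "\<exists>!\<rho>. density_op \<rho> \<and> \<rho> = Pj ** \<rho> ** Pj \<and> lindblad H h A \<rho> = 0"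
    proof (rule ex1I[of _ \<rho>])
      show "density_op \<rho> \<and> \<rho> = Pj ** \<rho> ** Pj \<and> lindblad H h A \<rho> = 0" using rho by blast
      fix \<rho>' assume r': "density_op \<rho>' \<and> \<rho>' = Pj ** \<rho>' ** Pj \<and> lindblad H h A \<rho>' = 0"
      then have "\<rho>' = mat (trace_op \<rho>') ** \<rho>"
        using L.kernel_unique[OF irr_j proj_j Pjne cPj rho(2,3) tr1] by blast
      then show "\<rho>' = \<rho>" using r' by (simp add: density_op_def)
    qed
    show "\<forall>U \<rho>j. unitary_op U \<and> U ** H = H ** U \<and> (\<forall>\<alpha>\<in>A. U ** h \<alpha> = h \<alpha> ** U)
                  \<and> U ** Pj = Pi ** U \<and> U ** U = mat 1
                  \<and> density_op \<rho>j \<and> \<rho>j = Pj ** \<rho>j ** Pj \<and> lindblad H h A \<rho>j = 0 \<longrightarrow>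
                (\<forall>\<sigma>. \<sigma> = Pi ** \<sigma> ** Pj \<and> lindblad H h A \<sigma> = 0 \<longrightarrow>
                     (\<exists>c. \<sigma> = cscale c (U ** \<rho>j)))"
    proof (intro allI impI)
      fix U \<rho>j \<sigma>
      assume a: "unitary_op U \<and> U ** H = H ** U \<and> (\<forall>\<alpha>\<in>A. U ** h \<alpha> = h \<alpha> ** U)
                  \<and> U ** Pj = Pi ** U \<and> U ** U = mat 1
                  \<and> density_op \<rho>j \<and> \<rho>j = Pj ** \<rho>j ** Pj \<and> lindblad H h A \<rho>j = 0"
        and s: "\<sigma> = Pi ** \<sigma> ** Pj \<and> lindblad H h A \<sigma> = 0"
      have cU: "comm_all H h A U" using L.comm_all_unitary a by blast
      have UPi: "U ** Pi = Pj ** U"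
      proof -
        have "U ** Pi = U ** (mat 1 - Pj)" using sum1 by (metis add_diff_cancel_right')
        also have "\<dots> = (mat 1 - Pi) ** U" using a by (simp add: matrix_diff_ldistrib matrix_diff_rdistrib)
        also have "\<dots> = Pj ** U" using sum1 by (metis add_diff_cancel_left')
        finally show ?thesis .
      qed
      define Y where "Y = U ** \<sigma>"
      have Yb: "Y = Pj ** Y ** Pj"
        unfolding Y_def using s UPi by (metis matrix_mul_assoc)
      have DY: "L.D Y = 0" using s by (simp add: Y_def L.D_left[OF cU])
      have tr1': "trace_op \<rho>j = 1" using a by (simp add: density_op_def)
      have "Y = mat (trace_op Y) ** \<rho>j"
        using L.kernel_unique[OF irr_j proj_j Pjne cPj _ _ tr1' Yb DY] a by blast
      then have "U ** Y = mat (trace_op Y) ** (U ** \<rho>j)" by (metis mat_mult_assoc_comm)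
      moreover have "U ** Y = \<sigma>" using a by (simp add: Y_def matrix_mul_assoc)
      ultimately show "\<exists>c. \<sigma> = cscale c (U ** \<rho>j)" by (metis cscale_mat)
    qed
  qed
  show ?thesis using fwd bwd part2 by blast
qed

end
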